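(* Let $V$ be a real vector space of finite even dimension with nondegenerate quadratic form $Q$, $\sigma$ a real structure on $\mathbb{C}l(V)$, $e$ a primitive idempotent of $\mathbb{C}l(V)$ and $S_e=\mathbb{C}l(V)e$ the corresponding algebraic spinor module. (1) If $ee^{\times_\sigma}=0$, then the $\sigma$-product $(\cdot,\cdot)_\sigma$ vanishes identically on $S_e$ (hence is not a Krein product on $S_e$). (2) If $ee^{\times_\sigma}\neq0$, then (a) there exists a unique primitive idempotent $f\in\mathbb{C}l(V)$ such that $f^{\times_\sigma}=f$ and $S_e=S_f$; and (b) the restriction of $(\cdot,\cdot)_\sigma$ to $S_e$ is a nondegenerate hermitian form for which the representation $L$ of $\mathbb{C}l(V)$ on $S_e$ by left multiplication is $\sigma$-compatible.
   Context: $Cl(V,Q)$ is the real Clifford algebra with $v^2=+Q(v)$, $\mathbb{C}l(V)$ its complexification. A real structure is an involutive antilinear algebra automorphism of $\mathbb{C}l(V)$ stabilizing $V^{\mathbb{C}}$. $T$ is the linear antiautomorphism restricting to the identity on $V$; $a^{\times_\sigma}=\sigma(T(a))$. $\tau_n$ is the normalized trace (unique linear form with $\tau_n(ab)=\tau_n(ba)$, $\tau_n(1)=1$), and $(a,b)_\sigma=\tau_n(a^{\times_\sigma}b)$. A primitive idempotent is a nonzero idempotent that is not the sum of two nonzero orthogonal idempotents. A representation $L$ on a space with nondegenerate hermitian form $(\cdot,\cdot)'$ is $\sigma$-compatible if $(L(a)\psi,\phi)'=(\psi,L(a^{\times_\sigma})\phi)'$ for all $a,\psi,\phi$. *)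

theory Defs
  imports Complex_Main
begin

text \<open>
Concrete model of the complexified Clifford algebra of a nondegenerate real quadratic
space (V,Q) of dimension CARD('n).  We fix an orthogonal basis (e_i) of V indexed by a
finite linearly ordered type 'n with Q(e_i) = eps i, eps i in {1,-1} (Sylvester).
Elements of the complexified Clifford algebra are coefficient functions
a :: 'n set => complex, a = sum over S of a S e_S, where e_S = e_{s1}...e_{sk},
s1 < ... < sk.  Convention v^2 = +Q(v), i.e. e_i e_i = eps i.
\<close>

type_synonym 'n clf = "'n set \<Rightarrow> complex"

definition cl_zero :: "'n clf" where "cl_zero = (\<lambda>S. 0)"
definition cl_one :: "'n clf" where "cl_one = (\<lambda>S. if S = {} then 1 else 0)"
definition cl_add :: "'n clf \<Rightarrow> 'n clf \<Rightarrow> 'n clf" where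
  "cl_add a b = (\<lambda>S. a S + b S)"
definition cl_scale :: "complex \<Rightarrow> 'n clf \<Rightarrow> 'n clf" where
  "cl_scale c a = (\<lambda>S. c * a S)"

text \<open>e_S e_T = cl_sign eps S T * e_{S symmetric-difference T}\<close>
definition cl_sign :: "('n::{finite,linorder} \<Rightarrow> real) \<Rightarrow> 'n set \<Rightarrow> 'n set \<Rightarrow> complex" where
  "cl_sign eps S T =
     (-1) ^ card {(i, j). i \<in> S \<and> j \<in> T \<and> j < i} * (\<Prod>i\<in>S \<inter> T. complex_of_real (eps i))"

definition cl_mult :: "('n::{finite,linorder} \<Rightarrow> real) \<Rightarrow> 'n clf \<Rightarrow> 'n clf \<Rightarrow> 'n clf" where
  "cl_mult eps a b = (\<lambda>U. \<Sum>S\<in>UNIV. \<Sum>T\<in>UNIV.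
       if (S - T) \<union> (T - S) = U then cl_sign eps S T * a S * b T else 0)"

text \<open>The subspace V^C (complexification of V) inside the algebra.\<close>
definition cl_vec :: "'n clf set" where
  "cl_vec = {a. \<forall>S. card S \<noteq> 1 \<longrightarrow> a S = 0}"

definition cl_linear :: "('n clf \<Rightarrow> 'n clf) \<Rightarrow> bool" where
  "cl_linear f \<longleftrightarrow> (\<forall>a b. f (cl_add a b) = cl_add (f a) (f b)) \<and>
                     (\<forall>c a. f (cl_scale c a) = cl_scale c (f a))"

definition cl_linear_form :: "('n clf \<Rightarrow> complex) \<Rightarrow> bool" where
  "cl_linear_form f \<longleftrightarrow> (\<forall>a b. f (cl_add a b) = f a + f b) \<and>
                          (\<forall>c a. f (cl_scale c a) = c * f a)"

definition real_structure :: "('n::{finite,linorder} \<Rightarrow> real) \<Rightarrow> ('n clf \<Rightarrow> 'n clf) \<Rightarrow> bool" where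
  "real_structure eps \<sigma> \<longleftrightarrow>
     (\<forall>a b. \<sigma> (cl_add a b) = cl_add (\<sigma> a) (\<sigma> b)) \<and>
     (\<forall>c a. \<sigma> (cl_scale c a) = cl_scale (cnj c) (\<sigma> a)) \<and>
     (\<forall>a b. \<sigma> (cl_mult eps a b) = cl_mult eps (\<sigma> a) (\<sigma> b)) \<and>
     \<sigma> cl_one = cl_one \<and>
     bij \<sigma> \<and>
     (\<forall>a. \<sigma> (\<sigma> a) = a) \<and>
     (\<forall>v\<in>cl_vec. \<sigma> v \<in> cl_vec)"

definition cl_T :: "('n::{finite,linorder} \<Rightarrow> real) \<Rightarrow> 'n clf \<Rightarrow> 'n clf" where
  "cl_T eps = (THE T. cl_linear T \<and> bij T \<and> T cl_one = cl_one \<and>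
                 (\<forall>a b. T (cl_mult eps a b) = cl_mult eps (T b) (T a)) \<and>
                 (\<forall>v\<in>cl_vec. T v = v))"

definition cl_adj :: "('n::{finite,linorder} \<Rightarrow> real) \<Rightarrow> ('n clf \<Rightarrow> 'n clf) \<Rightarrow> 'n clf \<Rightarrow> 'n clf" where
  "cl_adj eps \<sigma> a = \<sigma> (cl_T eps a)"

definition cl_trace :: "('n::{finite,linorder} \<Rightarrow> real) \<Rightarrow> 'n clf \<Rightarrow> complex" where
  "cl_trace eps = (THE \<tau>. cl_linear_form \<tau> \<and>
                    (\<forall>a b. \<tau> (cl_mult eps a b) = \<tau> (cl_mult eps b a)) \<and> \<tau> cl_one = 1)"

definition sigma_prod :: "('n::{finite,linorder} \<Rightarrow> real) \<Rightarrow> ('n clf \<Rightarrow> 'n clf) \<Rightarrow> 'n clf \<Rightarrow> 'n clf \<Rightarrow> complex" where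
  "sigma_prod eps \<sigma> a b = cl_trace eps (cl_mult eps (cl_adj eps \<sigma> a) b)"

definition cl_idempotent :: "('n::{finite,linorder} \<Rightarrow> real) \<Rightarrow> 'n clf \<Rightarrow> bool" where
  "cl_idempotent eps e \<longleftrightarrow> cl_mult eps e e = e"

definition primitive_idempotent :: "('n::{finite,linorder} \<Rightarrow> real) \<Rightarrow> 'n clf \<Rightarrow> bool" where
  "primitive_idempotent eps e \<longleftrightarrow> cl_idempotent eps e \<and> e \<noteq> cl_zero \<and>
     \<not> (\<exists>f g. cl_idempotent eps f \<and> cl_idempotent eps g \<and> f \<noteq> cl_zero \<and> g \<noteq> cl_zero \<and>
             cl_mult eps f g = cl_zero \<and> cl_mult eps g f = cl_zero \<and> e = cl_add f g)"

definition spinor_module :: "('n::{finite,linorder} \<Rightarrow> real) \<Rightarrow> 'n clf \<Rightarrow> 'n clf set" where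
  "spinor_module eps e = range (\<lambda>a. cl_mult eps a e)"

end

theory Submission imports Defs "HOL-Analysis.Cartesian_Space" "HOL-Computational_Algebra.Fundamental_Theorem_Algebra" "HOL-Computational_Algebra.Polynomial_Factorial" "HOL-Computational_Algebra.Field_as_Ring"
begin


definition sd :: "'a set \<Rightarrow> 'a set \<Rightarrow> 'a set" where "sd S T = (S - T) \<union> (T - S)"

lemma sd_sd[simp]: "sd S (sd S T) = T" by (auto simp: sd_def)
lemma sd_assoc: "sd (sd S T) U = sd S (sd T U)" by (auto simp: sd_def)
lemma sd_comm: "sd S T = sd T S" by (auto simp: sd_def)
lemma sd_empty[simp]: "sd S {} = S" "sd {} S = S" "sd S S = {}" by (auto simp: sd_def)
lemma sd_eq_iff: "(sd S T = U) = (T = sd S U)" by (auto simp: sd_def)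

lemma sum_sd_reindex: "(\<Sum>X\<in>(UNIV::'a::finite set set). f X) = (\<Sum>T\<in>UNIV. f (sd S T))"
  by (rule sum.reindex_bij_witness[of _ "sd S" "sd S"]) auto

definition csum :: "('i \<Rightarrow> 'n clf) \<Rightarrow> 'i set \<Rightarrow> 'n clf" where
  "csum F I = (\<lambda>U. \<Sum>i\<in>I. F i U)"

definition bs :: "'n set \<Rightarrow> 'n clf" where "bs S = (\<lambda>U. if U = S then 1 else 0)"

definition inv2 :: "'n::linorder set \<Rightarrow> 'n set \<Rightarrow> nat" where
  "inv2 S T = card {(i, j). i \<in> S \<and> j \<in> T \<and> j < i}"

definition pe :: "('n \<Rightarrow> real) \<Rightarrow> 'n set \<Rightarrow> complex" where
  "pe eps X = (\<Prod>i\<in>X. complex_of_real (eps i))"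

lemma cl_sign_alt: "cl_sign eps S T = (-1) ^ inv2 S T * pe eps (S \<inter> T)"
  by (simp add: cl_sign_def inv2_def pe_def)

lemma neg1_pow_eq: "even (a + b) \<Longrightarrow> ((-1::complex) ^ a) = (-1) ^ b"
  by (metis (no_types, lifting) even_add neg_one_even_power neg_one_odd_power)

lemma card_sd_parity:
  fixes A B :: "'a set" assumes "finite A" "finite B"
  shows "card (sd A B) + 2 * card (A \<inter> B) = card A + card B"
proof -
  have f: "finite (A - B)" "finite (B - A)" "finite (A \<inter> B)" using assms by auto
  have "card (sd A B) = card (A - B) + card (B - A)"
    unfolding sd_def by (rule card_Un_disjoint) (use f in auto)
  moreover have "card A = card (A - B) + card (A \<inter> B)"
    using card_Un_disjoint[OF f(1) f(3)] by (metis Diff_Diff_Int Diff_disjoint Un_Diff_Int inf_commute)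
  moreover have "card B = card (B - A) + card (A \<inter> B)"
    using card_Un_disjoint[OF f(2) f(3)] by (metis Diff_Diff_Int Diff_disjoint Un_Diff_Int inf_commute Int_commute)
  ultimately show ?thesis by simp
qed

lemma inv2_sd_left:
  fixes X Y U :: "'n::{finite,linorder} set"
  shows "even (inv2 (sd X Y) U + inv2 X U + inv2 Y U)"
proof -
  let ?P = "\<lambda>X. {(i, j). i \<in> X \<and> j \<in> U \<and> j < i}"
  have e: "?P (sd X Y) = sd (?P X) (?P Y)" by (auto simp: sd_def)
  have "card (sd (?P X) (?P Y)) + 2 * card (?P X \<inter> ?P Y) = card (?P X) + card (?P Y)"
    by (rule card_sd_parity) auto
  then show ?thesis unfolding inv2_def e
    by (metis (no_types, lifting) dvd_add_triv_right_iff even_add even_mult_iff odd_two_times_div_two_nat)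
qed

lemma inv2_sd_right:
  fixes X Y U :: "'n::{finite,linorder} set"
  shows "even (inv2 U (sd X Y) + inv2 U X + inv2 U Y)"
proof -
  let ?P = "\<lambda>X. {(i, j). i \<in> U \<and> j \<in> X \<and> j < i}"
  have e: "?P (sd X Y) = sd (?P X) (?P Y)" by (auto simp: sd_def)
  have "card (sd (?P X) (?P Y)) + 2 * card (?P X \<inter> ?P Y) = card (?P X) + card (?P Y)"
    by (rule card_sd_parity) auto
  then show ?thesis unfolding inv2_def e
    by (metis (no_types, lifting) dvd_add_triv_right_iff even_add even_mult_iff odd_two_times_div_two_nat)
qed

lemma pe_union: "finite A \<Longrightarrow> finite B \<Longrightarrow> A \<inter> B = {} \<Longrightarrow> pe eps (A \<union> B) = pe eps A * pe eps B"
  by (simp add: pe_def prod.union_disjoint)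

lemma cocycle:
  fixes S T U :: "'n::{finite,linorder} set"
  shows "cl_sign eps S T * cl_sign eps (sd S T) U = cl_sign eps T U * cl_sign eps S (sd T U)"
proof -
  have p1: "pe eps (S \<inter> T) * pe eps (sd S T \<inter> U) = pe eps ((S \<inter> T) \<union> (sd S T \<inter> U))"
    by (rule pe_union[symmetric]) (auto simp: sd_def)
  have p2: "pe eps (T \<inter> U) * pe eps (S \<inter> sd T U) = pe eps ((T \<inter> U) \<union> (S \<inter> sd T U))"
    by (rule pe_union[symmetric]) (auto simp: sd_def)
  have se: "(S \<inter> T) \<union> (sd S T \<inter> U) = (T \<inter> U) \<union> (S \<inter> sd T U)" by (auto simp: sd_def)
  have ev: "even ((inv2 S T + inv2 (sd S T) U) + (inv2 T U + inv2 S (sd T U)))"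
    using inv2_sd_left[of S T U] inv2_sd_right[of S T U] by (simp add: even_add) blast
  have "(-1::complex) ^ inv2 S T * (-1) ^ inv2 (sd S T) U = (-1) ^ inv2 T U * (-1) ^ inv2 S (sd T U)"
    unfolding power_add[symmetric] by (rule neg1_pow_eq[OF ev])
  note pw = this
  show ?thesis
  proof -
    have "cl_sign eps S T * cl_sign eps (sd S T) U =
      ((-1::complex) ^ inv2 S T * (-1) ^ inv2 (sd S T) U) * (pe eps (S \<inter> T) * pe eps (sd S T \<inter> U))"
      unfolding cl_sign_alt by (simp add: mult_ac)
    also have "\<dots> = ((-1) ^ inv2 T U * (-1) ^ inv2 S (sd T U)) * (pe eps (T \<inter> U) * pe eps (S \<inter> sd T U))"
      using pw p1 p2 se by simp
    also have "\<dots> = cl_sign eps T U * cl_sign eps S (sd T U)"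
      unfolding cl_sign_alt by (simp add: mult_ac)
    finally show ?thesis .
  qed
qed

locale clf =
  fixes eps :: "'n::{finite,linorder} \<Rightarrow> real"
  assumes nondeg: "\<forall>i. eps i = 1 \<or> eps i = -1"
begin

abbreviation "M \<equiv> cl_mult eps"
abbreviation "sg \<equiv> cl_sign eps"

lemma pe_sq: "pe eps X * pe eps X = 1"
proof -
  have "complex_of_real (eps i) * complex_of_real (eps i) = 1" for i
    using nondeg[rule_format, of i] by (cases "eps i = 1") auto
  then show ?thesis unfolding pe_def prod.distrib[symmetric] by simp
qed

lemma sg_sq: "sg S T * sg S T = 1"
proof -
  have "((-1::complex) ^ inv2 S T) * ((-1) ^ inv2 S T) = 1"
    by (simp add: power_add[symmetric] ) 
  note pw = this
  show ?thesis
  proof -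
    have "sg S T * sg S T = (((-1::complex) ^ inv2 S T) * ((-1) ^ inv2 S T)) * (pe eps (S \<inter> T) * pe eps (S \<inter> T))"
      unfolding cl_sign_alt by (simp add: mult_ac)
    then show ?thesis using pe_sq pw by simp
  qed
qed

lemma sg_nz: "sg S T \<noteq> 0" using sg_sq[of S T] by auto

lemma sg_empty[simp]: "sg {} T = 1" "sg S {} = 1"
  by (simp_all add: cl_sign_def)

lemma mult_apply: "M a b U = (\<Sum>S\<in>UNIV. sg S (sd S U) * a S * b (sd S U))"
proof -
  have "M a b U = (\<Sum>S\<in>UNIV. \<Sum>T\<in>UNIV. if T = sd S U then sg S T * a S * b T else 0)"
    unfolding cl_mult_def by (simp add: sd_def[symmetric] sd_eq_iff)
  then show ?thesis by (simp add: sum.delta')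
qed

end



lemma cl_add_apply[simp]: "cl_add a b U = a U + b U" by (simp add: cl_add_def)
lemma cl_scale_apply[simp]: "cl_scale c a U = c * a U" by (simp add: cl_scale_def)
lemma cl_zero_apply[simp]: "cl_zero U = 0" by (simp add: cl_zero_def)
lemma csum_apply[simp]: "csum F I U = (\<Sum>i\<in>I. F i U)" by (simp add: csum_def)
lemma bs_apply: "bs S U = (if U = S then 1 else 0)" by (simp add: bs_def)
lemma cl_one_bs: "cl_one = bs {}" by (simp add: cl_one_def bs_def fun_eq_iff)

lemma basis_decomp: "a = csum (\<lambda>S. cl_scale (a S) (bs S)) (UNIV::'n::finite set set)"
proof (rule ext)
  fix x
  have "(\<Sum>i\<in>UNIV. a i * bs i x) = (\<Sum>i\<in>UNIV. if x = i then a i else 0)" by (rule sum.cong) (auto simp: bs_apply)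
  then show "a x = csum (\<lambda>S. cl_scale (a S) (bs S)) UNIV x" by simp
qed

context clf begin

lemma mult_add_left: "M (cl_add a b) c = cl_add (M a c) (M b c)"
  by (simp add: fun_eq_iff mult_apply sum.distrib algebra_simps)
lemma mult_add_right: "M a (cl_add b c) = cl_add (M a b) (M a c)"
  by (simp add: fun_eq_iff mult_apply sum.distrib algebra_simps)
lemma mult_scale_left: "M (cl_scale k a) b = cl_scale k (M a b)"
  by (simp add: fun_eq_iff mult_apply sum_distrib_left algebra_simps)
lemma mult_scale_right: "M a (cl_scale k b) = cl_scale k (M a b)"
  by (simp add: fun_eq_iff mult_apply sum_distrib_left algebra_simps)
lemma mult_zero_left[simp]: "M cl_zero a = cl_zero"
  by (simp add: fun_eq_iff mult_apply)
lemma mult_zero_right[simp]: "M a cl_zero = cl_zero"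
  by (simp add: fun_eq_iff mult_apply)
lemma mult_csum_left: "M (csum F I) b = csum (\<lambda>i. M (F i) b) I"
  by (simp add: fun_eq_iff mult_apply sum_distrib_left sum_distrib_right algebra_simps sum.swap[of _ I])
lemma mult_csum_right: "M a (csum F I) = csum (\<lambda>i. M a (F i)) I"
  by (simp add: fun_eq_iff mult_apply sum_distrib_left sum_distrib_right algebra_simps sum.swap[of _ I])

lemma mult_bs: "M (bs S) (bs T) = cl_scale (sg S T) (bs (sd S T))"
proof (rule ext)
  fix U
  have "M (bs S) (bs T) U = (\<Sum>X\<in>UNIV. if X = S then sg X (sd X U) * bs T (sd X U) else 0)"
    unfolding mult_apply by (rule sum.cong) (auto simp: bs_apply)
  also have "\<dots> = sg S (sd S U) * bs T (sd S U)" by (simp add: sum.delta')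
  also have "\<dots> = cl_scale (sg S T) (bs (sd S T)) U"
    by (auto simp: bs_apply sd_eq_iff)
  finally show "M (bs S) (bs T) U = cl_scale (sg S T) (bs (sd S T)) U" .
qed

lemma mult_one_left[simp]: "M cl_one a = a"
proof (rule ext)
  fix U
  have "M cl_one a U = (\<Sum>X\<in>(UNIV::'n set set). if X = {} then a U else 0)"
    unfolding mult_apply cl_one_def by (intro sum.cong) auto
  then show "M cl_one a U = a U" by simp
qed

lemma mult_one_right[simp]: "M a cl_one = a"
proof (rule ext)
  fix U
  have "M a cl_one U = (\<Sum>X\<in>(UNIV::'n set set). if X = U then a U else 0)"
    unfolding mult_apply cl_one_def by (intro sum.cong) (auto simp: sd_eq_iff)
  then show "M a cl_one U = a U" by simp
qed

lemma assoc: "M (M a b) c = M a (M b c)"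
proof (rule ext)
  fix W
  have "M (M a b) c W = (\<Sum>X\<in>UNIV. \<Sum>S\<in>UNIV. sg X (sd X W) * sg S (sd S X) * a S * b (sd S X) * c (sd X W))"
    unfolding mult_apply by (simp add: sum_distrib_left sum_distrib_right mult_ac)
  also have "\<dots> = (\<Sum>S\<in>UNIV. \<Sum>X\<in>UNIV. sg X (sd X W) * sg S (sd S X) * a S * b (sd S X) * c (sd X W))"
    by (rule sum.swap)
  also have "\<dots> = (\<Sum>S\<in>UNIV. \<Sum>T\<in>UNIV. sg (sd S T) (sd (sd S T) W) * sg S (sd S (sd S T)) * a S * b (sd S (sd S T)) * c (sd (sd S T) W))"
    by (rule sum.cong[OF refl], rule sum_sd_reindex)
  also have "\<dots> = (\<Sum>S\<in>UNIV. \<Sum>T\<in>UNIV. sg (sd S T) (sd (sd S T) W) * sg S T * a S * b T * c (sd (sd S T) W))"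
    by simp
  also have "\<dots> = (\<Sum>S\<in>UNIV. \<Sum>T\<in>UNIV. sg S (sd S W) * sg T (sd T (sd S W)) * a S * b T * c (sd T (sd S W)))"
  proof (intro sum.cong refl)
    fix S T
    have e1: "sd (sd S T) W = sd T (sd S W)" by (auto simp: sd_def)
    have e2: "sd T (sd T (sd S W)) = sd S W" by simp
    have "sg S T * sg (sd S T) (sd T (sd S W)) = sg T (sd T (sd S W)) * sg S (sd T (sd T (sd S W)))"
      by (rule cocycle)
    then have "sg (sd S T) (sd T (sd S W)) * sg S T = sg S (sd S W) * sg T (sd T (sd S W))"
      by (simp add: mult_ac)
    then show "sg (sd S T) (sd (sd S T) W) * sg S T * a S * b T * c (sd (sd S T) W) =
          sg S (sd S W) * sg T (sd T (sd S W)) * a S * b T * c (sd T (sd S W))"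
      unfolding e1 by simp
  qed
  also have "\<dots> = M a (M b c) W"
    unfolding mult_apply by (simp add: sum_distrib_left sum_distrib_right mult_ac)
  finally show "M (M a b) c W = M a (M b c) W" .
qed

end



declare cl_add_apply[simp del] cl_scale_apply[simp del] cl_zero_apply[simp del] csum_apply[simp del]
lemmas pw = cl_add_apply cl_scale_apply cl_zero_apply csum_apply

lemma csum_empty[simp]: "csum F {} = cl_zero" by (simp add: fun_eq_iff pw)
lemma csum_insert: "finite I \<Longrightarrow> i \<notin> I \<Longrightarrow> csum F (insert i I) = cl_add (F i) (csum F I)"
  by (simp add: fun_eq_iff pw)

lemma linear_form_zero: "cl_linear_form f \<Longrightarrow> f cl_zero = 0"
proof -
  assume f: "cl_linear_form f"
  have "cl_zero = cl_scale 0 cl_zero" by (simp add: fun_eq_iff pw)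
  then have "f cl_zero = 0 * f cl_zero" using f unfolding cl_linear_form_def by metis
  then show ?thesis by simp
qed

lemma linear_form_csum: assumes "cl_linear_form f" "finite I"
  shows "f (csum F I) = (\<Sum>i\<in>I. f (F i))"
  using assms(2)
proof (induction I rule: finite_induct)
  case empty then show ?case unfolding csum_empty sum.empty by (rule linear_form_zero[OF assms(1)])
next
  case (insert x F) then show ?case using assms(1) by (simp add: csum_insert cl_linear_form_def)
qed

lemma linear_zero: "cl_linear f \<Longrightarrow> f cl_zero = cl_zero"
proof -
  assume f: "cl_linear f"
  have "cl_zero = cl_scale 0 cl_zero" by (simp add: fun_eq_iff pw)
  then have "f cl_zero = cl_scale 0 (f cl_zero)" using f unfolding cl_linear_def by metis
  then show ?thesis by (simp add: fun_eq_iff pw)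
qed

lemma linear_csum: assumes "cl_linear f" "finite I"
  shows "f (csum F I) = csum (\<lambda>i. f (F i)) I"
  using assms(2)
proof (induction I rule: finite_induct)
  case empty then show ?case unfolding csum_empty by (rule linear_zero[OF assms(1)])
next
  case (insert x F) then show ?case using assms(1) by (simp add: csum_insert cl_linear_def)
qed

lemma inv2_bilin:
  fixes S T :: "'n::{finite,linorder} set"
  shows "even (inv2 (sd S T) (sd S T) + inv2 S S + inv2 S T + inv2 T S + inv2 T T)"
proof -
  have a: "even (inv2 (sd S T) (sd S T) + inv2 S (sd S T) + inv2 T (sd S T))" by (rule inv2_sd_left)
  have b: "even (inv2 S (sd S T) + inv2 S S + inv2 S T)" by (rule inv2_sd_right)
  have c: "even (inv2 T (sd S T) + inv2 T S + inv2 T T)" by (rule inv2_sd_right)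
  show ?thesis using a b c unfolding even_add by argo
qed

definition rv :: "'n::linorder set \<Rightarrow> complex" where "rv S = (-1) ^ inv2 S S"

lemma rv_sq: "rv S * rv S = 1" by (simp add: rv_def power_add[symmetric])
lemma rv_empty[simp]: "rv {} = 1" by (simp add: rv_def inv2_def)
lemma rv_single: "card S = 1 \<Longrightarrow> rv S = 1"
proof -
  assume "card S = 1"
  then obtain b where S: "S = {b}" by (rule card_1_singletonE)
  have e: "{(i, j). i \<in> S \<and> j \<in> S \<and> j < i} = {}" using S by auto
  show ?thesis unfolding rv_def inv2_def e by simp
qed

lemma sd_sd2[simp]: "sd (sd S T) T = S" "sd T (sd S T) = S" by (auto simp: sd_def)

context clf begin

lemma rv_sd: "rv (sd S T) * sg S T = rv S * rv T * sg T S"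
proof -
  have e: "even (inv2 (sd S T) (sd S T) + inv2 S T) = even (inv2 S S + inv2 T T + inv2 T S)"
    using inv2_bilin[of S T] unfolding even_add by argo
  have "(-1::complex) ^ (inv2 (sd S T) (sd S T) + inv2 S T) = (-1) ^ (inv2 S S + inv2 T T + inv2 T S)"
    by (rule neg1_pow_eq) (use e in \<open>simp add: even_add\<close>)
  then show ?thesis unfolding rv_def cl_sign_alt
    by (simp add: power_add mult_ac Int_commute)
qed

definition Tr :: "'n clf \<Rightarrow> 'n clf" where "Tr a = (\<lambda>S. rv S * a S)"

lemma Tr_Tr[simp]: "Tr (Tr a) = a"
  by (simp add: Tr_def fun_eq_iff mult.assoc[symmetric] rv_sq)

lemma Tr_linear: "cl_linear Tr"
  by (simp add: cl_linear_def Tr_def fun_eq_iff algebra_simps pw)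

lemma Tr_bij: "bij Tr"
  by (rule o_bij[of Tr]) (simp_all add: fun_eq_iff)

lemma Tr_one: "Tr cl_one = cl_one"
  by (simp add: Tr_def cl_one_def fun_eq_iff)

lemma Tr_vec: "v \<in> cl_vec \<Longrightarrow> Tr v = v"
  by (auto simp: Tr_def cl_vec_def fun_eq_iff pw) (metis One_nat_def rv_single)

lemma Tr_mult: "Tr (M a b) = M (Tr b) (Tr a)"
proof (rule ext)
  fix U
  have "Tr (M a b) U = (\<Sum>S\<in>UNIV. rv U * sg S (sd S U) * a S * b (sd S U))"
    by (simp add: Tr_def mult_apply sum_distrib_left mult_ac)
  also have "\<dots> = (\<Sum>S\<in>UNIV. sg (sd S U) S * rv (sd S U) * b (sd S U) * rv S * a S)"
  proof (intro sum.cong refl)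
    fix S
    have "rv (sd S (sd S U)) * sg S (sd S U) = rv S * rv (sd S U) * sg (sd S U) S" by (rule rv_sd)
    then show "rv U * sg S (sd S U) * a S * b (sd S U) = sg (sd S U) S * rv (sd S U) * b (sd S U) * rv S * a S"
      by (simp add: mult_ac)
  qed
  also have "\<dots> = (\<Sum>T\<in>UNIV. sg T (sd T U) * rv T * b T * rv (sd T U) * a (sd T U))"
    by (subst sum_sd_reindex[where S=U]) (simp add: sd_comm)
  also have "\<dots> = M (Tr b) (Tr a) U"
    by (simp add: Tr_def mult_apply mult_ac)
  finally show "Tr (M a b) U = M (Tr b) (Tr a) U" .
qed

lemma bs_vec: "bs {i} \<in> cl_vec" by (auto simp: cl_vec_def bs_apply)

lemma Tr_unique:
  assumes lin: "cl_linear T" and one: "T cl_one = cl_one"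
    and anti: "\<forall>a b. T (M a b) = M (T b) (T a)" and vec: "\<forall>v\<in>cl_vec. T v = v"
  shows "T = Tr"
proof -
  have bsT: "T (bs S) = cl_scale (rv S) (bs S)" for S
  proof -
  have "finite S" by simp
  then show ?thesis
  proof (induction S rule: finite_induct)
    case empty then show ?case using one by (simp add: cl_one_bs fun_eq_iff pw)
  next
    case (insert i S)
    have si: "sd {i} S = insert i S" using insert by (auto simp: sd_def)
    have "M (bs {i}) (bs S) = cl_scale (sg {i} S) (bs (insert i S))" by (simp add: mult_bs si)
    then have b: "bs (insert i S) = cl_scale (1 / sg {i} S) (M (bs {i}) (bs S))"
      using sg_nz[of "{i}" S] by (simp add: fun_eq_iff pw)
    have r: "rv (insert i S) * sg {i} S = rv S * sg S {i}"
      using rv_sd[of "{i}" S] by (simp add: si rv_single)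
    have "T (bs (insert i S)) = cl_scale (1 / sg {i} S) (M (T (bs S)) (T (bs {i})))"
      using lin anti unfolding b cl_linear_def by simp
    also have "\<dots> = cl_scale (1 / sg {i} S) (M (cl_scale (rv S) (bs S)) (bs {i}))"
      using insert(3) vec bs_vec[of i] by simp
    also have "\<dots> = cl_scale (1 / sg {i} S * rv S * sg S {i}) (bs (insert i S))"
      using si by (simp add: mult_scale_left mult_bs sd_comm[of S] fun_eq_iff pw)
    also have "\<dots> = cl_scale (rv (insert i S)) (bs (insert i S))"
    proof -
      have "1 / sg {i} S * rv S * sg S {i} = rv (insert i S)"
        using r sg_nz[of "{i}" S] by (simp add: field_simps)
      then show ?thesis by simp
    qed
    finally show ?case .
  qed
  qed
  show ?thesis
  proof (rule ext)
    fix a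
    have "T a = csum (\<lambda>S. T (cl_scale (a S) (bs S))) UNIV"
      by (subst basis_decomp[of a]) (rule linear_csum[OF lin], simp)
    also have "\<dots> = csum (\<lambda>S. cl_scale (a S) (cl_scale (rv S) (bs S))) UNIV"
      using lin bsT by (simp add: cl_linear_def)
    also have "\<dots> = Tr a"
    proof (rule ext)
      fix U
      have "(\<Sum>S\<in>UNIV. a S * (rv S * bs S U)) = (\<Sum>S\<in>UNIV. if S = U then a U * rv U else 0)"
        by (rule sum.cong) (auto simp: bs_apply)
      then show "csum (\<lambda>S. cl_scale (a S) (cl_scale (rv S) (bs S))) UNIV U = Tr a U"
        by (simp add: Tr_def mult_ac pw)
    qed
    finally show "T a = Tr a" .
  qed
qed

lemma cl_T_eq: "cl_T eps = Tr"
  unfolding cl_T_def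
proof (rule the_equality)
  show "cl_linear Tr \<and> bij Tr \<and> Tr cl_one = cl_one \<and> (\<forall>a b. Tr (M a b) = M (Tr b) (Tr a)) \<and> (\<forall>v\<in>cl_vec. Tr v = v)"
    using Tr_linear Tr_bij Tr_one Tr_mult Tr_vec by blast
next
  fix T assume "cl_linear T \<and> bij T \<and> T cl_one = cl_one \<and> (\<forall>a b. T (M a b) = M (T b) (T a)) \<and> (\<forall>v\<in>cl_vec. T v = v)"
  then show "T = Tr" using Tr_unique by blast
qed

end



definition tau0 :: "'n clf \<Rightarrow> complex" where "tau0 a = a {}"

context clf begin

lemma tau_mult: "tau0 (M a b) = (\<Sum>S\<in>UNIV. sg S S * a S * b S)"
  by (simp add: tau0_def mult_apply)

lemma tau_comm: "tau0 (M a b) = tau0 (M b a)"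
  by (simp add: tau_mult mult_ac)

lemma tau_lin: "cl_linear_form tau0"
  by (simp add: cl_linear_form_def tau0_def pw)

lemma tau_one: "tau0 cl_one = 1" by (simp add: tau0_def cl_one_def)

lemma tau_nondeg: assumes "\<forall>b. tau0 (M a b) = 0" shows "a = cl_zero"
proof (rule ext)
  fix S
  have "tau0 (M a (bs S)) = (\<Sum>T\<in>UNIV. if T = S then sg S S * a S else 0)"
    unfolding tau_mult by (rule sum.cong) (auto simp: bs_apply)
  then have "sg S S * a S = 0" using assms by simp
  then show "a S = cl_zero S" using sg_nz[of S S] by (simp add: pw)
qed

lemma inv2_single_left: "inv2 {i} T = card {j\<in>T. j < i}"
proof -
  have "{(a, j). a \<in> {i} \<and> j \<in> T \<and> j < a} = Pair i ` {j\<in>T. j < i}" by auto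
  moreover have "inj_on (Pair i) {j\<in>T. j < i}" by (auto simp: inj_on_def)
  ultimately show ?thesis unfolding inv2_def by (simp add: card_image)
qed

lemma inv2_single_right: "inv2 T {i} = card {j\<in>T. i < j}"
proof -
  have "{(a, j). a \<in> T \<and> j \<in> {i} \<and> j < a} = (\<lambda>j. (j, i)) ` {j\<in>T. i < j}" by auto
  moreover have "inj_on (\<lambda>j. (j, i)) {j\<in>T. i < j}" by (auto simp: inj_on_def)
  ultimately show ?thesis unfolding inv2_def by (simp add: card_image)
qed

lemma inv2_single_sum: fixes T :: "'n set" shows "inv2 {i} T + inv2 T {i} = card (T - {i})"
proof -
  have "T - {i} = {j\<in>T. j < i} \<union> {j\<in>T. i < j}" by auto
  moreover have "card ({j\<in>T. j < i} \<union> {j\<in>T. i < j}) = card {j\<in>T. j < i} + card {j\<in>T. i < j}"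
    by (rule card_Un_disjoint) auto
  ultimately show ?thesis by (simp add: inv2_single_left inv2_single_right)
qed

lemma anti_sign: assumes "odd (card (T - {i}))" shows "sg {i} T = - sg T {i}"
proof -
  have "(-1::complex) ^ inv2 {i} T = - ((-1) ^ inv2 T {i})"
  proof -
    have "(-1::complex) ^ inv2 {i} T * (-1) ^ inv2 T {i} = -1"
      using assms by (simp add: power_add[symmetric] inv2_single_sum)
    moreover have "(-1::complex) ^ inv2 T {i} * (-1) ^ inv2 T {i} = 1"
      by (simp add: power_add[symmetric])
    ultimately show ?thesis by (metis mult.assoc mult_1_right mult_minus_left mult_1)
  qed
  then show ?thesis by (simp add: cl_sign_alt Int_commute)
qed

lemma sg_single_sq: "sg {i} {i} * sg {i} {i} = 1" by (rule sg_sq)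

end

locale clfe = clf eps for eps :: "'n::{finite,linorder} \<Rightarrow> real" +
  assumes even_dim: "even (card (UNIV::'n set))"
begin

lemma exists_anti: assumes "T \<noteq> {}" shows "\<exists>i. sg {i} T = - sg T {i}"
proof (cases "even (card T)")
  case True
  obtain i where i: "i \<in> T" using assms by auto
  have "card (T - {i}) = card T - 1" using i by simp
  moreover have "card T > 0" using assms by (simp add: card_gt_0_iff)
  ultimately have "odd (card (T - {i}))" using True assms by simp
  then show ?thesis using anti_sign by blast
next
  case False
  have "T \<noteq> UNIV" using False even_dim by auto
  then obtain i where i: "i \<notin> T" by auto
  then have "odd (card (T - {i}))" using False by simp
  then show ?thesis using anti_sign by blast
qed

lemma anticomm_bs: assumes "sg {i} T = - sg T {i}"
  shows "M (bs {i}) (bs T) = cl_scale (-1) (M (bs T) (bs {i}))"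
  using assms by (simp add: mult_bs sd_comm[of T] fun_eq_iff pw)

lemma mult_sq_single: "M (bs {i}) (bs {i}) = cl_scale (sg {i} {i}) cl_one"
  by (simp add: mult_bs cl_one_bs)

lemma trace_unique:
  assumes lin: "cl_linear_form t" and tr: "\<forall>a b. t (M a b) = t (M b a)" and one: "t cl_one = 1"
  shows "t = tau0"
proof -
  have tz: "t (bs T) = 0" if T: "T \<noteq> {}" for T
  proof -
    obtain i where i: "sg {i} T = - sg T {i}" using exists_anti[OF T] by blast
    let ?E = "bs {i}" and ?c = "sg {i} {i}"
    have "t (M (M ?E (bs T)) ?E) = t (M ?E (M (bs T) ?E))" by (simp add: assoc)
    also have "\<dots> = t (M (M (bs T) ?E) ?E)" using tr by blast
    also have "\<dots> = ?c * t (bs T)"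
      using lin by (simp add: assoc mult_sq_single mult_scale_right cl_linear_form_def)
    finally have a: "t (M (M ?E (bs T)) ?E) = ?c * t (bs T)" .
    have "t (M (M ?E (bs T)) ?E) = - (?c * t (bs T))"
      using lin by (simp add: anticomm_bs[OF i] mult_scale_left assoc mult_sq_single mult_scale_right cl_linear_form_def)
    with a have "?c * t (bs T) = 0" by auto
    then show ?thesis using sg_nz[of "{i}" "{i}"] by simp
  qed
  show ?thesis
  proof (rule ext)
    fix a
    have "t a = (\<Sum>S\<in>UNIV. t (cl_scale (a S) (bs S)))"
      by (subst basis_decomp[of a]) (rule linear_form_csum[OF lin], simp)
    also have "\<dots> = (\<Sum>S\<in>(UNIV::'n set set). if S = {} then a {} else 0)"
    proof (rule sum.cong[OF refl])
      fix S
      show "t (cl_scale (a S) (bs S)) = (if S = {} then a {} else 0)"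
        using lin tz[of S] one by (auto simp: cl_linear_form_def cl_one_bs)
    qed
    also have "\<dots> = tau0 a" by (simp add: tau0_def)
    finally show "t a = tau0 a" .
  qed
qed

lemma cl_trace_eq: "cl_trace eps = tau0"
  unfolding cl_trace_def
proof (rule the_equality)
  show "cl_linear_form tau0 \<and> (\<forall>a b. tau0 (M a b) = tau0 (M b a)) \<and> tau0 cl_one = 1"
    using tau_lin tau_comm tau_one by blast
next
  fix t assume "cl_linear_form t \<and> (\<forall>a b. t (M a b) = t (M b a)) \<and> t cl_one = 1"
  then show "t = tau0" using trace_unique by blast
qed

lemma mult_single_left: "M (bs {i}) z U = sg {i} (sd {i} U) * z (sd {i} U)"
proof -
  have "M (bs {i}) z U = (\<Sum>S\<in>UNIV. if S = {i} then sg {i} (sd {i} U) * z (sd {i} U) else 0)"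
    unfolding mult_apply by (rule sum.cong) (auto simp: bs_apply)
  then show ?thesis by simp
qed

lemma mult_single_right: "M z (bs {i}) U = sg (sd {i} U) {i} * z (sd {i} U)"
proof -
  have "M z (bs {i}) U = (\<Sum>S\<in>UNIV. if S = sd {i} U then sg (sd {i} U) {i} * z (sd {i} U) else 0)"
    unfolding mult_apply by (rule sum.cong) (auto simp: bs_apply sd_eq_iff sd_comm)
  then show ?thesis by simp
qed

lemma center: assumes "\<forall>i. M (bs {i}) z = M z (bs {i})"
  shows "z = cl_scale (z {}) cl_one"
proof (rule ext)
  fix T
  show "z T = cl_scale (z {}) cl_one T"
  proof (cases "T = {}")
    case True then show ?thesis by (simp add: pw cl_one_def)
  next
    case False
    obtain i where i: "sg {i} T = - sg T {i}" using exists_anti[OF False] by blast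
    have "M (bs {i}) z (sd {i} T) = M z (bs {i}) (sd {i} T)" using assms by simp
    then have "sg {i} T * z T = sg T {i} * z T"
      by (simp add: mult_single_left mult_single_right)
    then have "sg T {i} * z T = 0" using i by auto
    then have "z T = 0" using sg_nz[of T "{i}"] by (simp only: mult_eq_0_iff) blast
    then show ?thesis using False by (simp add: pw cl_one_def)
  qed
qed

definition bi :: "'n set \<Rightarrow> 'n clf" where "bi S = cl_scale (sg S S) (bs S)"

lemma bs_bi: "M (bs S) (bi S) = cl_one"
  by (simp add: bi_def mult_scale_right mult_bs cl_one_bs fun_eq_iff pw mult.assoc[symmetric] sg_sq)
lemma bi_bs: "M (bi S) (bs S) = cl_one"
  by (simp add: bi_def mult_scale_left mult_bs cl_one_bs fun_eq_iff pw mult.assoc[symmetric] sg_sq)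

lemma inv_unique: assumes "M x y = cl_one" "M y' x = cl_one" shows "y = y'"
proof -
  have "y = M (M y' x) y" using assms(2) by simp
  also have "\<dots> = M y' (M x y)" by (rule assoc)
  also have "\<dots> = y'" using assms(1) by simp
  finally show ?thesis .
qed

lemma bi_prod: "M (bi S) (bi {i}) = cl_scale (1 / sg {i} S) (bi (sd {i} S))"
proof -
  let ?c = "sg {i} S" and ?U = "sd {i} S"
  have c: "?c \<noteq> 0" by (rule sg_nz)
  have "M (M (bs {i}) (bs S)) (cl_scale (1 / ?c) (bi ?U)) = cl_one"
    using c by (simp add: mult_bs mult_scale_left mult_scale_right bs_bi fun_eq_iff pw)
  moreover have "M (M (bi S) (bi {i})) (M (bs {i}) (bs S)) = cl_one"
    by (simp add: assoc) (simp add: assoc[symmetric] bi_bs)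
  ultimately have "cl_scale (1 / sg {i} S) (bi (sd {i} S)) = M (bi S) (bi {i})" by (rule inv_unique)
  then show ?thesis by simp
qed

definition avg :: "'n clf \<Rightarrow> 'n clf" where
  "avg x = csum (\<lambda>S. M (M (bs S) x) (bi S)) UNIV"

lemma avg_conj: "M (M (bs {i}) (avg x)) (bi {i}) = avg x"
proof -
  have "M (M (bs {i}) (avg x)) (bi {i}) = csum (\<lambda>S. M (M (bs {i}) (M (M (bs S) x) (bi S))) (bi {i})) UNIV"
    unfolding avg_def by (simp add: mult_csum_left mult_csum_right)
  also have "\<dots> = csum (\<lambda>S. M (M (bs (sd {i} S)) x) (bi (sd {i} S))) UNIV"
  proof -
    have "M (M (bs {i}) (M (M (bs S) x) (bi S))) (bi {i}) = M (M (bs (sd {i} S)) x) (bi (sd {i} S))" for S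
    proof -
      have "M (M (bs {i}) (M (M (bs S) x) (bi S))) (bi {i}) = M (M (M (bs {i}) (bs S)) x) (M (bi S) (bi {i}))"
        by (simp add: assoc)
      also have "\<dots> = M (M (bs (sd {i} S)) x) (bi (sd {i} S))"
        using sg_nz[of "{i}" S]
        by (simp add: bi_prod mult_bs mult_scale_left mult_scale_right fun_eq_iff pw)
      finally show ?thesis .
    qed
    then show ?thesis by simp
  qed
  also have "\<dots> = avg x"
    unfolding avg_def by (rule ext, simp only: pw, rule sum_sd_reindex[symmetric])
  finally show ?thesis .
qed

lemma avg_central: "M (bs {i}) (avg x) = M (avg x) (bs {i})"
proof -
  have "M (avg x) (bs {i}) = M (M (M (bs {i}) (avg x)) (bi {i})) (bs {i})" by (simp add: avg_conj)
  also have "\<dots> = M (bs {i}) (avg x)" by (simp add: assoc bi_bs)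
  finally show ?thesis by simp
qed

lemma avg_eq: "avg x = cl_scale (of_nat (card (UNIV::'n set set)) * tau0 x) cl_one"
proof -
  have "avg x = cl_scale (avg x {}) cl_one" by (rule center) (simp add: avg_central)
  moreover have "avg x {} = of_nat (card (UNIV::'n set set)) * tau0 x"
  proof -
    have "avg x {} = (\<Sum>S\<in>UNIV. tau0 (M (M (bs S) x) (bi S)))"
      by (simp add: avg_def pw tau0_def)
    also have "\<dots> = (\<Sum>S\<in>(UNIV::'n set set). tau0 x)"
    proof (rule sum.cong[OF refl])
      fix S
      have "tau0 (M (M (bs S) x) (bi S)) = tau0 (M (bi S) (M (bs S) x))" by (rule tau_comm)
      also have "\<dots> = tau0 (M (M (bi S) (bs S)) x)" by (simp only: assoc)
      also have "\<dots> = tau0 x" by (simp add: bi_bs)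
      finally show "tau0 (M (M (bs S) x) (bi S)) = tau0 x" .
    qed
    finally show ?thesis by simp
  qed
  ultimately show ?thesis by simp
qed

end



locale clfs = clfe eps for eps :: "'n::{finite,linorder} \<Rightarrow> real" +
  fixes \<sigma> :: "'n clf \<Rightarrow> 'n clf"
  assumes rs: "real_structure eps \<sigma>"
begin

lemma tau_add: "tau0 (cl_add a b) = tau0 a + tau0 b" by (simp add: tau0_def pw)
lemma tau_scale: "tau0 (cl_scale c a) = c * tau0 a" by (simp add: tau0_def pw)

lemma s_add: "\<sigma> (cl_add a b) = cl_add (\<sigma> a) (\<sigma> b)" using rs by (simp add: real_structure_def)
lemma s_scale: "\<sigma> (cl_scale c a) = cl_scale (cnj c) (\<sigma> a)" using rs by (simp add: real_structure_def)
lemma s_mult: "\<sigma> (M a b) = M (\<sigma> a) (\<sigma> b)" using rs by (simp add: real_structure_def)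
lemma s_one: "\<sigma> cl_one = cl_one" using rs by (simp add: real_structure_def)
lemma s_s[simp]: "\<sigma> (\<sigma> a) = a" using rs by (simp add: real_structure_def)
lemma s_vec: "v \<in> cl_vec \<Longrightarrow> \<sigma> v \<in> cl_vec" using rs by (simp add: real_structure_def)
lemma s_bij: "bij \<sigma>" using rs by (simp add: real_structure_def)

lemma s_Tr_s: "(\<lambda>a. \<sigma> (Tr (\<sigma> a))) = Tr"
proof (rule Tr_unique)
  show "cl_linear (\<lambda>a. \<sigma> (Tr (\<sigma> a)))"
    using Tr_linear unfolding cl_linear_def by (simp add: s_add s_scale)
  show "\<sigma> (Tr (\<sigma> cl_one)) = cl_one" by (simp add: s_one Tr_one)
  show "\<forall>a b. \<sigma> (Tr (\<sigma> (M a b))) = M (\<sigma> (Tr (\<sigma> b))) (\<sigma> (Tr (\<sigma> a)))"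
    by (simp add: s_mult Tr_mult)
  show "\<forall>v\<in>cl_vec. \<sigma> (Tr (\<sigma> v)) = v"
    by (simp add: s_vec Tr_vec)
qed

definition X :: "'n clf \<Rightarrow> 'n clf" where "X a = \<sigma> (Tr a)"

lemma adj_eq: "cl_adj eps \<sigma> = X"
  by (simp add: fun_eq_iff cl_adj_def cl_T_eq X_def)

lemma X_X[simp]: "X (X a) = a"
proof -
  have "X (X a) = \<sigma> (Tr (\<sigma> (Tr a)))" by (simp add: X_def)
  also have "\<dots> = Tr (Tr a)" using s_Tr_s by (metis)
  finally show ?thesis by simp
qed

lemma X_add: "X (cl_add a b) = cl_add (X a) (X b)"
  using Tr_linear by (simp add: X_def cl_linear_def s_add)
lemma X_scale: "X (cl_scale c a) = cl_scale (cnj c) (X a)"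
  using Tr_linear by (simp add: X_def cl_linear_def s_scale)
lemma X_mult: "X (M a b) = M (X b) (X a)"
  by (simp add: X_def Tr_mult s_mult)
lemma X_one: "X cl_one = cl_one" by (simp add: X_def Tr_one s_one)
lemma X_zero: "X cl_zero = cl_zero"
proof -
  have "cl_zero = cl_scale 0 cl_zero" by (simp add: fun_eq_iff pw)
  then have "X cl_zero = cl_scale 0 (X cl_zero)" by (metis X_scale complex_cnj_zero)
  then show ?thesis by (simp add: fun_eq_iff pw)
qed
lemma X_eq_zero: "(X a = cl_zero) = (a = cl_zero)"
  by (metis X_X X_zero)

lemma tau_X: "tau0 (X a) = cnj (tau0 a)"
proof -
  have "(\<lambda>a. cnj (tau0 (X a))) = tau0"
  proof (rule trace_unique)
    show "cl_linear_form (\<lambda>a. cnj (tau0 (X a)))"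
      by (simp add: cl_linear_form_def X_add X_scale tau_add tau_scale)
    show "\<forall>a b. cnj (tau0 (X (M a b))) = cnj (tau0 (X (M b a)))"
      by (simp add: X_mult tau_comm[of "X a" "X b" for a b])
    show "cnj (tau0 (X cl_one)) = 1" by (simp add: X_one tau_one)
  qed
  then have "cnj (tau0 (X a)) = tau0 a" by metis
  then show ?thesis by (metis complex_cnj_cnj)
qed

definition sp :: "'n clf \<Rightarrow> 'n clf \<Rightarrow> complex" where "sp a b = tau0 (M (X a) b)"

lemma sp_eq: "sigma_prod eps \<sigma> = sp"
  by (simp add: fun_eq_iff sigma_prod_def cl_trace_eq adj_eq sp_def)

lemma sp_herm: "sp a b = cnj (sp b a)"
proof -
  have "cnj (sp b a) = tau0 (X (M (X b) a))" by (simp add: sp_def tau_X)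
  also have "\<dots> = sp a b" by (simp add: X_mult sp_def)
  finally show ?thesis by simp
qed

lemma sp_add: "sp a (cl_add b c) = sp a b + sp a c"
  by (simp add: sp_def mult_add_right tau_add)

lemma sp_scale: "sp a (cl_scale c b) = c * sp a b"
  by (simp add: sp_def mult_scale_right tau_scale)

lemma sp_compat: "sp (M a b) c = sp b (M (X a) c)"
  by (simp add: sp_def X_mult assoc)

lemma part1:
  assumes "M e (X e) = cl_zero"
  shows "sp (M x e) (M y e) = 0"
proof -
  have "sp (M x e) (M y e) = tau0 (M (X e) (M (X x) (M y e)))"
    by (simp add: sp_def X_mult assoc)
  also have "\<dots> = tau0 (M (M (X x) (M y e)) (X e))" by (rule tau_comm)
  also have "\<dots> = tau0 (M (X x) (M y (M e (X e))))" by (simp add: assoc)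
  also have "\<dots> = 0" using assms by (simp add: tau0_def pw)
  finally show ?thesis .
qed

end



lemma cl_add_scale0[simp]: "cl_add (cl_scale 0 u) y = y" by (simp add: fun_eq_iff pw)
lemma cl_scale_one[simp]: "cl_scale 1 a = a" by (simp add: fun_eq_iff pw)
lemma cl_add_zero[simp]: "cl_add cl_zero a = a" "cl_add a cl_zero = a" by (simp_all add: fun_eq_iff pw)
lemma cl_scale_zero[simp]: "cl_scale c cl_zero = cl_zero" "cl_scale 0 a = cl_zero" by (simp_all add: fun_eq_iff pw)
lemma cl_scale_scale[simp]: "cl_scale c (cl_scale d a) = cl_scale (c * d) a" by (simp add: fun_eq_iff pw)

context clf begin

primrec pwr :: "'n clf \<Rightarrow> 'n clf \<Rightarrow> nat \<Rightarrow> 'n clf" where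
  "pwr u x 0 = u"
| "pwr u x (Suc n) = M x (pwr u x n)"

definition ev :: "'n clf \<Rightarrow> 'n clf \<Rightarrow> complex poly \<Rightarrow> 'n clf" where
  "ev u x P = csum (\<lambda>i. cl_scale (coeff P i) (pwr u x i)) {..degree P}"

definition unitfor :: "'n clf \<Rightarrow> 'n clf \<Rightarrow> bool" where
  "unitfor u x \<longleftrightarrow> M u x = x \<and> M x u = x \<and> M u u = u"

lemma pwr_u_left: "unitfor u x \<Longrightarrow> M u (pwr u x n) = pwr u x n"
  by (induction n) (simp_all add: unitfor_def assoc[symmetric])

lemma pwr_u_right: "unitfor u x \<Longrightarrow> M (pwr u x n) u = pwr u x n"
  by (induction n) (simp_all add: unitfor_def assoc)

lemma pwr_Suc_right: "unitfor u x \<Longrightarrow> pwr u x (Suc n) = M (pwr u x n) x"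
proof (induction n)
  case 0 then show ?case by (simp add: unitfor_def)
next
  case (Suc n)
  have "pwr u x (Suc (Suc n)) = M x (M (pwr u x n) x)" using Suc by simp
  also have "\<dots> = M (pwr u x (Suc n)) x" by (simp add: assoc)
  finally show ?case .
qed

lemma pwr_add: "unitfor u x \<Longrightarrow> M (pwr u x i) (pwr u x j) = pwr u x (i + j)"
  by (induction i) (simp_all add: pwr_u_left assoc)

lemma ev_apply: "ev u x P U = (\<Sum>i\<le>degree P. coeff P i * pwr u x i U)"
  by (simp add: ev_def pw)

lemma ev_bound: assumes "degree P < N" shows "ev u x P U = (\<Sum>i<N. coeff P i * pwr u x i U)"
proof -
  have "(\<Sum>i<N. coeff P i * pwr u x i U) = (\<Sum>i\<le>degree P. coeff P i * pwr u x i U)"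
    by (rule sum.mono_neutral_right) (use assms in \<open>auto simp: coeff_eq_0\<close>)
  then show ?thesis by (simp add: ev_apply)
qed

lemma ev_zero[simp]: "ev u x 0 = cl_zero"
  by (simp add: fun_eq_iff ev_apply pw)

lemma ev_add: "ev u x (P + Q) = cl_add (ev u x P) (ev u x Q)"
proof (rule ext)
  fix U
  let ?N = "Suc (max (degree P) (degree Q))"
  have "degree (P + Q) \<le> max (degree P) (degree Q)" by (rule degree_add_le_max)
  then have d: "degree (P + Q) < ?N" by simp
  have dP: "degree P < ?N" and dQ: "degree Q < ?N" by auto
  show "ev u x (P + Q) U = cl_add (ev u x P) (ev u x Q) U"
    unfolding pw ev_bound[OF d] ev_bound[OF dP] ev_bound[OF dQ]
    by (simp add: sum.distrib algebra_simps)
qed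

lemma ev_smult: "ev u x (smult c P) = cl_scale c (ev u x P)"
proof (rule ext)
  fix U
  have d: "degree (smult c P) < Suc (degree P)" by (simp add: le_imp_less_Suc)
  have dP: "degree P < Suc (degree P)" by simp
  show "ev u x (smult c P) U = cl_scale c (ev u x P) U"
    unfolding pw ev_bound[OF d] ev_bound[OF dP]
    by (simp add: sum_distrib_left algebra_simps)
qed

lemma ev_pCons: assumes "unitfor u x"
  shows "ev u x (pCons a P) = cl_add (cl_scale a u) (M x (ev u x P))"
proof (rule ext)
  fix U
  let ?N = "Suc (Suc (degree P))"
  have d: "degree (pCons a P) < ?N" by (simp add: degree_pCons_le le_imp_less_Suc)
  have "M x (ev u x P) = csum (\<lambda>i. M x (cl_scale (coeff P i) (pwr u x i))) {..degree P}"
    unfolding ev_def by (rule mult_csum_right)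
  then have m: "M x (ev u x P) U = (\<Sum>i\<le>degree P. coeff P i * pwr u x (Suc i) U)"
    by (simp add: mult_scale_right pw)
  have "(\<Sum>i<Suc (degree P). coeff P i * pwr u x (Suc i) U) = (\<Sum>i\<le>degree P. coeff P i * pwr u x (Suc i) U)"
    by (simp add: lessThan_Suc_atMost)
  then show "ev u x (pCons a P) U = cl_add (cl_scale a u) (M x (ev u x P)) U"
    unfolding ev_bound[OF d] pw m
    by (simp only: sum.lessThan_Suc_shift) (simp add: pw)
qed

lemma ev_u_left: "unitfor u x \<Longrightarrow> M u (ev u x P) = ev u x P"
  by (simp add: ev_def mult_csum_right mult_scale_right pwr_u_left)

lemma ev_u_right: "unitfor u x \<Longrightarrow> M (ev u x P) u = ev u x P"
  by (simp add: ev_def mult_csum_left mult_scale_left pwr_u_right)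

lemma ev_mult: assumes u: "unitfor u x" shows "ev u x (P * Q) = M (ev u x P) (ev u x Q)"
proof (induction P rule: pCons_induct)
  show "ev u x (0 * Q) = M (ev u x 0) (ev u x Q)" by simp
next
  fix a P assume IH: "ev u x (P * Q) = M (ev u x P) (ev u x Q)"
  have "ev u x (pCons a P * Q) = ev u x (smult a Q + pCons 0 (P * Q))" by simp
  also have "\<dots> = cl_add (cl_scale a (ev u x Q)) (M x (M (ev u x P) (ev u x Q)))"
    using u by (simp add: IH ev_add ev_smult ev_pCons)
  also have "\<dots> = M (ev u x (pCons a P)) (ev u x Q)"
    using u by (simp add: ev_pCons mult_add_left mult_scale_left ev_u_left assoc)
  finally show "ev u x (pCons a P * Q) = M (ev u x (pCons a P)) (ev u x Q)" .
qed

lemma ev_one: "unitfor u x \<Longrightarrow> ev u x 1 = u"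
  using ev_pCons[of u x 1 0] by (simp add: one_pCons fun_eq_iff pw)

lemma ev_const: "unitfor u x \<Longrightarrow> ev u x [:c:] = cl_scale c u"
  using ev_pCons[of u x c 0] by (simp add: fun_eq_iff pw)

lemma ev_lin: "unitfor u x \<Longrightarrow> ev u x [:a, b:] = cl_add (cl_scale a u) (cl_scale b x)"
  using ev_pCons[of u x a "[:b:]"] ev_const[of u x b]
  by (simp add: mult_scale_right unitfor_def)

lemma ev_power: "unitfor u x \<Longrightarrow> ev u x (P ^ k) = pwr u (ev u x P) k"
  by (induction k) (simp_all add: ev_one ev_mult)

lemma ev_comm: "unitfor u x \<Longrightarrow> M (ev u x P) (ev u x Q) = M (ev u x Q) (ev u x P)"
  by (metis ev_mult mult.commute)

lemma ev_from_coeffs: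
  assumes "\<exists>i\<le>N. c i \<noteq> 0" and "csum (\<lambda>i. cl_scale (c i) (pwr u x i)) {..N} = cl_zero"
  shows "\<exists>P. P \<noteq> 0 \<and> ev u x P = cl_zero"
proof -
  define P where "P = Poly (map c [0..<Suc N])"
  have cf: "coeff P i = (if i \<le> N then c i else 0)" for i
    by (simp add: P_def nth_default_def del: upt_Suc)
  have "P \<noteq> 0" using assms(1) cf by (metis coeff_0)
  moreover have "ev u x P = cl_zero"
  proof (rule ext)
    fix U
    have "degree P \<le> N" by (rule degree_le) (simp add: cf)
    then have d: "degree P < Suc N" by simp
    have "ev u x P U = (\<Sum>i<Suc N. c i * pwr u x i U)"
      unfolding ev_bound[OF d] by (rule sum.cong) (auto simp: cf)
    also have "\<dots> = csum (\<lambda>i. cl_scale (c i) (pwr u x i)) {..N} U"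
      by (simp add: pw lessThan_Suc_atMost)
    finally show "ev u x P U = cl_zero U" using assms(2) by simp
  qed
  ultimately show ?thesis by blast
qed

lemma annihilator: "\<exists>P. P \<noteq> 0 \<and> ev u x P = cl_zero"
proof -
  let ?N = "card (UNIV::'n set set)"
  define v where "v i = (vec_lambda (pwr u x i) :: complex ^ ('n set))" for i
  show ?thesis
  proof (cases "inj_on v {..?N}")
    case False
    then obtain i j where ij: "i \<le> ?N" "j \<le> ?N" "i \<noteq> j" "v i = v j"
      unfolding inj_on_def by auto
    then have pe: "pwr u x i = pwr u x j" unfolding v_def by (metis vec_lambda_inverse UNIV_I)
    define c where "c k = (if k = j then 1 else if k = i then -1 else (0::complex))" for k
    show ?thesis
    proof (rule ev_from_coeffs[where N = ?N and c = c])
      show "\<exists>k\<le>?N. c k \<noteq> 0" using ij by (auto simp: c_def)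
      show "csum (\<lambda>k. cl_scale (c k) (pwr u x k)) {..?N} = cl_zero"
      proof (rule ext)
        fix U
        have "(\<Sum>k\<le>?N. c k * pwr u x k U) = (\<Sum>k\<le>?N. (if k = j then pwr u x j U else 0) + (if k = i then - pwr u x i U else 0))"
          by (rule sum.cong) (use ij in \<open>auto simp: c_def\<close>)
        also have "\<dots> = 0" using ij pe by (simp add: sum.distrib)
        finally show "csum (\<lambda>k. cl_scale (c k) (pwr u x k)) {..?N} U = cl_zero U" by (simp add: pw)
      qed
    qed
  next
    case True
    let ?V = "v ` {..?N}"
    have cV: "card ?V = Suc ?N" using True by (simp add: card_image)
    have "vec.dependent ?V"
    proof (rule ccontr)
      assume ind: "\<not> vec.dependent ?V"
      have "card ?V \<le> vec.dim ?V" using vec.independent_bound_general[OF ind] by simp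
      also have "\<dots> \<le> vec.dim (UNIV :: (complex ^ ('n set)) set)" by (rule vec.dim_subset) simp
      also have "\<dots> = ?N" by (simp add: card_cart_basis)
      finally show False using cV by simp
    qed
    then obtain w where w: "\<exists>t\<in>?V. w t \<noteq> 0" "(\<Sum>t\<in>?V. w t *s t) = 0"
      using vec.dependent_finite[of ?V] by auto
    define c where "c i = w (v i)" for i
    show ?thesis
    proof (rule ev_from_coeffs[where N = ?N and c = c])
      show "\<exists>k\<le>?N. c k \<noteq> 0" using w(1) by (auto simp: c_def)
      have s: "(\<Sum>k\<le>?N. c k *s v k) = 0"
        using w(2) True by (simp add: sum.reindex c_def)
      show "csum (\<lambda>k. cl_scale (c k) (pwr u x k)) {..?N} = cl_zero"
      proof (rule ext)
        fix U
        have "(\<Sum>k\<le>?N. c k *s v k) $ U = 0" using s by simp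
        then show "csum (\<lambda>k. cl_scale (c k) (pwr u x k)) {..?N} U = cl_zero U"
          by (simp add: pw sum_component v_def)
      qed
    qed
  qed
qed

end



context clfe begin

definition inB :: "'n clf \<Rightarrow> 'n clf \<Rightarrow> bool" where
  "inB e x \<longleftrightarrow> M e x = x \<and> M x e = x"

definition nilB :: "'n clf \<Rightarrow> 'n clf \<Rightarrow> bool" where
  "nilB e y \<longleftrightarrow> inB e y \<and> (\<exists>k. pwr e y k = cl_zero)"

lemma prim_idem: "primitive_idempotent eps e \<Longrightarrow> M e e = e"
  by (simp add: primitive_idempotent_def cl_idempotent_def)
lemma prim_nz: "primitive_idempotent eps e \<Longrightarrow> e \<noteq> cl_zero"
  by (simp add: primitive_idempotent_def)

lemma inB_unit: "M e e = e \<Longrightarrow> inB e x \<Longrightarrow> unitfor e x"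
  by (simp add: inB_def unitfor_def)

lemma inB_e: "M e e = e \<Longrightarrow> inB e e" by (simp add: inB_def)
lemma inB_mult: "inB e a \<Longrightarrow> inB e b \<Longrightarrow> inB e (M a b)"
  unfolding inB_def by (simp add: assoc[symmetric]) (simp add: assoc)
lemma inB_add: "inB e a \<Longrightarrow> inB e b \<Longrightarrow> inB e (cl_add a b)"
  by (simp add: inB_def mult_add_left mult_add_right)
lemma inB_scale: "inB e a \<Longrightarrow> inB e (cl_scale c a)"
  by (simp add: inB_def mult_scale_left mult_scale_right)
lemma inB_zero: "inB e cl_zero" by (simp add: inB_def)
lemma inB_E: "M e e = e \<Longrightarrow> inB e (M e (M a e))"
  by (simp add: inB_def assoc[symmetric]) (simp add: assoc)
lemma inB_ev: "M e e = e \<Longrightarrow> inB e x \<Longrightarrow> inB e (ev e x P)"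
  using ev_u_left ev_u_right inB_unit by (simp add: inB_def)

lemma cl_add_comm: "cl_add a b = cl_add b a" by (simp add: fun_eq_iff pw)
lemma cl_add_assoc: "cl_add (cl_add a b) c = cl_add a (cl_add b c)" by (simp add: fun_eq_iff pw)

lemma ev_diff: "ev u x (P - Q) = cl_add (ev u x P) (cl_scale (-1) (ev u x Q))"
proof -
  have "ev u x (P - Q) = ev u x (P + smult (-1) Q)" by simp
  also have "\<dots> = cl_add (ev u x P) (cl_scale (-1) (ev u x Q))" by (simp only: ev_add ev_smult)
  finally show ?thesis .
qed

lemma prim_idem_split:
  assumes p: "primitive_idempotent eps e" and g: "M g g = g" and gB: "inB e g"
  shows "g = cl_zero \<or> g = e"
proof (rule ccontr)
  assume c: "\<not> (g = cl_zero \<or> g = e)"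
  have ee: "M e e = e" using p by (rule prim_idem)
  define h where "h = cl_add e (cl_scale (-1) g)"
  have ge: "M g e = g" "M e g = g" using gB by (auto simp: inB_def)
  have gh: "M g h = cl_zero" unfolding h_def using ge g
    by (simp add: mult_add_right mult_scale_right fun_eq_iff pw)
  have hg: "M h g = cl_zero" unfolding h_def using ge g
    by (simp add: mult_add_left mult_scale_left fun_eq_iff pw)
  have hh: "M h h = h" unfolding h_def using ge g ee
    by (simp add: mult_add_left mult_add_right mult_scale_left mult_scale_right fun_eq_iff pw)
  have hnz: "h \<noteq> cl_zero"
  proof
    assume "h = cl_zero"
    then have "e = g" unfolding h_def by (simp add: fun_eq_iff pw)
    then show False using c by simp
  qed
  have eq: "e = cl_add g h" unfolding h_def by (simp add: fun_eq_iff pw)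
  have "g \<noteq> cl_zero" using c by simp
  then show False using p gh hg hh hnz eq g
    unfolding primitive_idempotent_def cl_idempotent_def by blast
qed

lemma nil_decomp:
  assumes p: "primitive_idempotent eps e" and x: "inB e x"
  shows "\<exists>z. nilB e (cl_add x (cl_scale (-z) e))"
proof -
  have ee: "M e e = e" using p by (rule prim_idem)
  have u: "unitfor e x" using inB_unit[OF ee x] .
  have enz: "e \<noteq> cl_zero" using p by (rule prim_nz)
  obtain P0 where P0: "P0 \<noteq> 0 \<and> ev e x P0 = cl_zero" using annihilator by blast
  have "\<exists>P. (P \<noteq> 0 \<and> ev e x P = cl_zero) \<and> (\<forall>Q. (Q \<noteq> 0 \<and> ev e x Q = cl_zero) \<longrightarrow> degree P \<le> degree Q)"
    by (rule ex_has_least_nat) (rule P0)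
  then obtain P where P: "P \<noteq> 0" "ev e x P = cl_zero"
    and minP': "\<forall>Q. (Q \<noteq> 0 \<and> ev e x Q = cl_zero) \<longrightarrow> degree P \<le> degree Q"
    by blast
  have minP: "\<And>Q. Q \<noteq> 0 \<and> ev e x Q = cl_zero \<Longrightarrow> degree P \<le> degree Q" using minP' by blast
  have dP: "degree P \<noteq> 0"
  proof
    assume "degree P = 0"
    then obtain c where Pc: "P = [:c:]" by (rule degree_eq_zeroE)
    have cnz: "c \<noteq> 0" using P(1) Pc by auto
    have "cl_scale c e = cl_zero" using P(2) by (simp add: Pc ev_const[OF u])
    then have "e = cl_zero" using cnz by (simp add: fun_eq_iff pw)
    then show False using enz by simp
  qed
  then have "\<not> constant (poly P)" unfolding constant_degree by simp
  then obtain z where z: "poly P z = 0"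
    using fundamental_theorem_of_algebra by blast
  define L where "L = [:- z, 1:]"
  define k where "k = order z P"
  have k1: "k \<noteq> 0" using z P(1) order_root unfolding k_def by blast
  obtain Q where PQ: "P = L ^ k * Q" and nd: "\<not> L dvd Q"
    using order_decomp[OF P(1), of z] unfolding L_def k_def by blast
  have Qnz: "Q \<noteq> 0" using PQ P(1) by auto
  have "prime_elem L" unfolding L_def by (rule prime_elem_linear_field_poly) simp
  then have "coprime L Q" using nd by (rule prime_elem_imp_coprime)
  then have "coprime (L ^ k) Q" by simp
  then have "gcd (L ^ k) Q = 1" by (rule coprime_imp_gcd_eq_1)
  then obtain A B where AB: "A * L ^ k + B * Q = 1"
    using bezout_coefficients_fst_snd[of "L ^ k" Q] by metis
  define g where "g = ev e x (B * Q)"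
  have evP: "ev e x (R * P) = cl_zero" for R using P(2) by (simp add: ev_mult[OF u])
  have gg: "M g g = g"
  proof -
    have eqBQ: "(B * Q) * (B * Q) = B * Q - (A * B) * P"
    proof -
      have "(B * Q) * (B * Q) = (B * Q) * (1 - A * L ^ k)" using AB by (metis add_diff_cancel_left')
      then show ?thesis using PQ by (simp add: algebra_simps)
    qed
    have "M g g = ev e x ((B * Q) * (B * Q))" unfolding g_def by (rule ev_mult[OF u, symmetric])
    also have "\<dots> = ev e x (B * Q - (A * B) * P)" unfolding eqBQ ..
    also have "\<dots> = g" unfolding g_def ev_diff evP by simp
    finally show ?thesis .
  qed
  have gB: "inB e g" unfolding g_def by (rule inB_ev[OF ee x])
  have Lk: "ev e x L = cl_add x (cl_scale (-z) e)"
    unfolding L_def by (simp add: ev_lin[OF u]) (rule cl_add_comm)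
  from prim_idem_split[OF p gg gB] show ?thesis
  proof
    assume g0: "g = cl_zero"
    have "ev e x (A * L ^ k) = e"
    proof -
      have e1: "A * L ^ k = 1 - B * Q" using AB by (metis add_diff_cancel_right')
      have "ev e x (A * L ^ k) = cl_add (ev e x 1) (cl_scale (-1) (ev e x (B * Q)))"
        unfolding e1 by (rule ev_diff)
      then show ?thesis using g0 unfolding g_def by (simp add: ev_one[OF u])
    qed
    then have "ev e x Q = M (ev e x (A * L ^ k)) (ev e x Q)" using ev_u_left[OF u] by simp
    also have "\<dots> = ev e x (A * P)" using PQ by (simp add: ev_mult[OF u] assoc)
    also have "\<dots> = cl_zero" using evP[of A] by simp
    finally have "ev e x Q = cl_zero" .
    then have "degree P \<le> degree Q" using minP Qnz by blast
    moreover have "degree P = k + degree Q"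
      using PQ Qnz by (simp add: degree_mult_eq L_def degree_linear_power)
    ultimately show ?thesis using k1 by simp
  next
    assume ge: "g = e"
    have "ev e x (L ^ k) = M (ev e x (L ^ k)) (ev e x (B * Q))"
      using ge ev_u_right[OF u] unfolding g_def by simp
    also have "\<dots> = ev e x (L ^ k * (B * Q))" by (rule ev_mult[OF u, symmetric])
    also have "\<dots> = ev e x (B * P)" using PQ by (simp add: mult_ac)
    also have "\<dots> = cl_zero" by (rule evP)
    finally have "pwr e (cl_add x (cl_scale (-z) e)) k = cl_zero"
      using ev_power[OF u, of L k] Lk by simp
    moreover have "inB e (cl_add x (cl_scale (-z) e))"
      using x inB_e[OF ee] by (simp add: inB_add inB_scale)
    ultimately show ?thesis unfolding nilB_def by blast
  qed
qed

lemma pwr_scale: "unitfor e m \<Longrightarrow> pwr e (cl_scale c m) k = cl_scale (c ^ k) (pwr e m k)"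
  by (induction k) (simp_all add: mult_scale_left mult_scale_right mult.commute)

lemma inv_exists:
  assumes ee: "M e e = e" and m: "nilB e m" and mu: "\<mu> \<noteq> 0"
  shows "\<exists>r. inB e r \<and> M (cl_add (cl_scale \<mu> e) m) r = e \<and> M r (cl_add (cl_scale \<mu> e) m) = e"
proof -
  have mB: "inB e m" and "\<exists>k. pwr e m k = cl_zero" using m by (auto simp: nilB_def)
  then obtain k where k: "pwr e m k = cl_zero" by blast
  have u: "unitfor e m" using inB_unit[OF ee mB] .
  define q where "q = [:0, - 1 / \<mu>:]"
  define W where "W = smult (1 / \<mu>) (\<Sum>j<k. q ^ j)"
  have lin: "ev e m [:\<mu>, 1:] = cl_add (cl_scale \<mu> e) m" by (simp add: ev_lin[OF u])
  have "[:\<mu>, 1:] = smult \<mu> (1 - q)" using mu by (simp add: q_def one_pCons)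
  then have "[:\<mu>, 1:] * W = (1 - q) * (\<Sum>j<k. q ^ j)" using mu by (simp add: W_def)
  also have "\<dots> = 1 - q ^ k" by (rule one_diff_power_eq[symmetric])
  finally have pw1: "[:\<mu>, 1:] * W = 1 - q ^ k" .
  have evq: "ev e m q = cl_scale (- 1 / \<mu>) m" unfolding q_def by (simp add: ev_lin[OF u])
  have "ev e m (q ^ k) = cl_zero"
    unfolding ev_power[OF u] evq pwr_scale[OF u] k by simp
  then have one: "ev e m ([:\<mu>, 1:] * W) = e" unfolding pw1 ev_diff ev_one[OF u] by simp
  have "M (cl_add (cl_scale \<mu> e) m) (ev e m W) = M (ev e m [:\<mu>, 1:]) (ev e m W)" using lin by simp
  also have "\<dots> = ev e m ([:\<mu>, 1:] * W)" by (rule ev_mult[OF u, symmetric])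
  finally have r1: "M (cl_add (cl_scale \<mu> e) m) (ev e m W) = e" using one by simp
  have "M (ev e m W) (cl_add (cl_scale \<mu> e) m) = M (ev e m W) (ev e m [:\<mu>, 1:])" using lin by simp
  also have "\<dots> = ev e m (W * [:\<mu>, 1:])" by (rule ev_mult[OF u, symmetric])
  also have "\<dots> = ev e m ([:\<mu>, 1:] * W)" by (simp only: mult.commute)
  finally have r2: "M (ev e m W) (cl_add (cl_scale \<mu> e) m) = e" using one by simp
  note r1 r2
  moreover have "inB e (ev e m W)" by (rule inB_ev[OF ee mB])
  ultimately show ?thesis using r1 by blast
qed

lemma no_right_inv:
  assumes ee: "M e e = e" and enz: "e \<noteq> cl_zero" and y: "nilB e y" and r: "inB e r"
  shows "M y r \<noteq> e"
proof
  assume yr: "M y r = e"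
  have yB: "inB e y" and "\<exists>k. pwr e y k = cl_zero" using y by (auto simp: nilB_def)
  then obtain k where k: "pwr e y k = cl_zero" by blast
  have uy: "unitfor e y" using inB_unit[OF ee yB] .
  have ur: "unitfor e r" using inB_unit[OF ee r] .
  have "M (pwr e y j) (pwr e r j) = e" for j
  proof (induction j)
    case 0 then show ?case using ee by simp
  next
    case (Suc j)
    have "M (pwr e y (Suc j)) (pwr e r (Suc j)) = M (pwr e y j) (M (M y r) (pwr e r j))"
      unfolding pwr_Suc_right[OF uy] by (simp add: assoc)
    also have "\<dots> = e" using Suc yr pwr_u_left[OF ur] by simp
    finally show ?case .
  qed
  from this[of k] show False using k enz by simp
qed

lemma no_left_inv:
  assumes ee: "M e e = e" and enz: "e \<noteq> cl_zero" and y: "nilB e y" and r: "inB e r"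
  shows "M r y \<noteq> e"
proof
  assume ry: "M r y = e"
  have yB: "inB e y" and "\<exists>k. pwr e y k = cl_zero" using y by (auto simp: nilB_def)
  then obtain k where k: "pwr e y k = cl_zero" by blast
  have uy: "unitfor e y" using inB_unit[OF ee yB] .
  have ur: "unitfor e r" using inB_unit[OF ee r] .
  have "M (pwr e r j) (pwr e y j) = e" for j
  proof (induction j)
    case 0 then show ?case using ee by simp
  next
    case (Suc j)
    have "M (pwr e r (Suc j)) (pwr e y (Suc j)) = M (pwr e r j) (M (M r y) (pwr e y j))"
      unfolding pwr_Suc_right[OF ur] by (simp add: assoc)
    also have "\<dots> = e" using Suc ry pwr_u_left[OF uy] by simp
    finally show ?case .
  qed
  from this[of k] show False using k enz by simp
qed

lemma nil_scale: assumes ee: "M e e = e" and n: "nilB e n" shows "nilB e (cl_scale c n)"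
proof -
  have nB: "inB e n" using n by (simp add: nilB_def)
  obtain k where k: "pwr e n k = cl_zero" using n by (auto simp: nilB_def)
  have "pwr e (cl_scale c n) k = cl_zero" using pwr_scale[OF inB_unit[OF ee nB]] k by simp
  then show ?thesis using inB_scale[OF nB] unfolding nilB_def by blast
qed

lemma nil_zero: "nilB e cl_zero"
  unfolding nilB_def by (auto simp: inB_zero intro: exI[of _ 1])

lemma decomp_B:
  assumes p: "primitive_idempotent eps e" and w: "inB e w"
  obtains z m where "nilB e m" "w = cl_add (cl_scale z e) m"
proof -
  obtain z where "nilB e (cl_add w (cl_scale (-z) e))" using nil_decomp[OF p w] by blast
  moreover have "w = cl_add (cl_scale z e) (cl_add w (cl_scale (-z) e))" by (simp add: fun_eq_iff pw)
  ultimately show ?thesis using that by blast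
qed

lemma nil_mult_right:
  assumes p: "primitive_idempotent eps e" and n: "nilB e n" and b: "inB e b"
  shows "nilB e (M n b)"
proof -
  have ee: "M e e = e" using p by (rule prim_idem)
  have enz: "e \<noteq> cl_zero" using p by (rule prim_nz)
  have nB: "inB e n" using n by (simp add: nilB_def)
  obtain z m where m: "nilB e m" and w: "M n b = cl_add (cl_scale z e) m"
    using decomp_B[OF p inB_mult[OF nB b]] by blast
  show ?thesis
  proof (cases "z = 0")
    case True then show ?thesis using w m by simp
  next
    case False
    obtain r where r: "inB e r" "M (cl_add (cl_scale z e) m) r = e"
      using inv_exists[OF ee m False] by blast
    have "M n (M b r) = M (M n b) r" by (rule assoc[symmetric])
    then have "M n (M b r) = e" using r w by simp
    moreover have "inB e (M b r)" using b r by (simp add: inB_mult)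
    ultimately show ?thesis using no_right_inv[OF ee enz n] by blast
  qed
qed

lemma nil_mult_left:
  assumes p: "primitive_idempotent eps e" and n: "nilB e n" and b: "inB e b"
  shows "nilB e (M b n)"
proof -
  have ee: "M e e = e" using p by (rule prim_idem)
  have enz: "e \<noteq> cl_zero" using p by (rule prim_nz)
  have nB: "inB e n" using n by (simp add: nilB_def)
  obtain z m where m: "nilB e m" and w: "M b n = cl_add (cl_scale z e) m"
    using decomp_B[OF p inB_mult[OF b nB]] by blast
  show ?thesis
  proof (cases "z = 0")
    case True then show ?thesis using w m by simp
  next
    case False
    obtain r where r: "inB e r" "M r (cl_add (cl_scale z e) m) = e"
      using inv_exists[OF ee m False] by blast
    have "M (M r b) n = e" using r w by (simp add: assoc)
    moreover have "inB e (M r b)" using b r by (simp add: inB_mult)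
    ultimately show ?thesis using no_left_inv[OF ee enz n] by blast
  qed
qed

lemma nil_add:
  assumes p: "primitive_idempotent eps e" and n1: "nilB e n1" and n2: "nilB e n2"
  shows "nilB e (cl_add n1 n2)"
proof -
  have ee: "M e e = e" using p by (rule prim_idem)
  have enz: "e \<noteq> cl_zero" using p by (rule prim_nz)
  have B1: "inB e n1" using n1 by (simp add: nilB_def)
  have B2: "inB e n2" using n2 by (simp add: nilB_def)
  obtain z m where m: "nilB e m" and w: "cl_add n1 n2 = cl_add (cl_scale z e) m"
    using decomp_B[OF p inB_add[OF B1 B2]] by blast
  show ?thesis
  proof (cases "z = 0")
    case True then show ?thesis using w m by simp
  next
    case False
    obtain r where r: "inB e r" "M (cl_add (cl_scale z e) m) r = e"
      using inv_exists[OF ee m False] by blast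
    have s: "cl_add (M n1 r) (M n2 r) = e" using r w by (simp add: mult_add_left[symmetric])
    have a: "nilB e (cl_scale (-1) (M n1 r))" using nil_scale[OF ee nil_mult_right[OF p n1 r(1)]] .
    obtain r' where r': "inB e r'" "M (cl_add (cl_scale 1 e) (cl_scale (-1) (M n1 r))) r' = e"
      using inv_exists[OF ee a one_neq_zero] by blast
    have eq: "cl_add (cl_scale 1 e) (cl_scale (-1) (M n1 r)) = M n2 r"
    proof (rule ext)
      fix U
      have h: "M n1 r U + M n2 r U = e U" using fun_cong[OF s, of U] by (simp add: pw)
      show "cl_add (cl_scale 1 e) (cl_scale (-1) (M n1 r)) U = M n2 r U"
        by (simp add: pw) (simp add: h[symmetric])
    qed
    have "M (M n2 r) r' = e" using r'(2) unfolding eq .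
    then have "M n2 (M r r') = e" by (simp add: assoc)
    moreover have "inB e (M r r')" using r r' by (simp add: inB_mult)
    ultimately show ?thesis using no_right_inv[OF ee enz n2] by blast
  qed
qed

lemma nil_csum:
  assumes p: "primitive_idempotent eps e" and "finite I" and "\<forall>i\<in>I. nilB e (F i)"
  shows "nilB e (csum F I)"
  using assms(2,3)
proof (induction I rule: finite_induct)
  case empty then show ?case by (simp add: nil_zero)
next
  case (insert i I) then show ?case by (simp add: csum_insert nil_add[OF p])
qed

lemma e_not_nil: assumes p: "primitive_idempotent eps e" shows "\<not> nilB e e"
proof
  assume "nilB e e"
  then obtain k where k: "pwr e e k = cl_zero" by (auto simp: nilB_def)
  have ee: "M e e = e" using p by (rule prim_idem)
  have "pwr e e j = e" for j by (induction j) (simp_all add: ee)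
  then show False using k prim_nz[OF p] by simp
qed

lemma card_pos: "card (UNIV :: 'n set set) \<noteq> 0" by simp

lemma nil_tau:
  assumes p: "primitive_idempotent eps e" and n: "nilB e n"
  shows "tau0 n = 0"
proof (rule ccontr)
  assume t: "tau0 n \<noteq> 0"
  have ee: "M e e = e" using p by (rule prim_idem)
  have nB: "inB e n" using n by (simp add: nilB_def)
  let ?D = "of_nat (card (UNIV :: 'n set set)) :: complex"
  have "M e (M (avg n) e) = cl_scale (?D * tau0 n) e"
    by (simp add: avg_eq mult_scale_left mult_scale_right ee)
  moreover have "M e (M (avg n) e) = csum (\<lambda>S. M (M (M e (M (bs S) e)) n) (M e (M (bi S) e))) UNIV"
  proof -
    have "M e (M (M (M (bs S) n) (bi S)) e) = M (M (M e (M (bs S) e)) n) (M e (M (bi S) e))" for S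
    proof -
      have "M e (M (M (M (bs S) n) (bi S)) e) = M e (M (M (M (bs S) (M e (M n e))) (bi S)) e)"
        using nB by (simp add: inB_def)
      also have "\<dots> = M (M (M e (M (bs S) e)) n) (M e (M (bi S) e))" by (simp add: assoc)
      finally show ?thesis .
    qed
    then show ?thesis unfolding avg_def by (simp add: mult_csum_left mult_csum_right)
  qed
  moreover have "nilB e (csum (\<lambda>S. M (M (M e (M (bs S) e)) n) (M e (M (bi S) e))) UNIV)"
    by (rule nil_csum[OF p]) (simp_all add: nil_mult_right[OF p] nil_mult_left[OF p] n inB_E[OF ee])
  ultimately have "nilB e (cl_scale (?D * tau0 n) e)" by simp
  then have "nilB e (cl_scale (1 / (?D * tau0 n)) (cl_scale (?D * tau0 n) e))" by (rule nil_scale[OF ee])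
  then have "nilB e e" using t by simp
  then show False using e_not_nil[OF p] by simp
qed

lemma nil_is_zero:
  assumes p: "primitive_idempotent eps e" and n: "nilB e n"
  shows "n = cl_zero"
proof (rule tau_nondeg, rule allI)
  fix a
  have ee: "M e e = e" using p by (rule prim_idem)
  have nB: "M e n = n" "M n e = n" using n by (auto simp: nilB_def inB_def)
  have "tau0 (M n a) = tau0 (M (M e n) a)" using nB by simp
  also have "\<dots> = tau0 (M e (M n a))" by (simp only: assoc)
  also have "\<dots> = tau0 (M (M n a) e)" by (rule tau_comm)
  also have "\<dots> = tau0 (M (M n e) (M a e))" using nB by (simp add: assoc)
  also have "\<dots> = tau0 (M n (M e (M a e)))" by (simp add: assoc)
  also have "\<dots> = 0" by (rule nil_tau[OF p nil_mult_right[OF p n inB_E[OF ee]]])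
  finally show "tau0 (M n a) = 0" .
qed

lemma scalar_B:
  assumes p: "primitive_idempotent eps e" and x: "inB e x"
  shows "\<exists>z. x = cl_scale z e"
proof -
  obtain z m where "nilB e m" "x = cl_add (cl_scale z e) m" by (rule decomp_B[OF p x])
  then have "x = cl_scale z e" using nil_is_zero[OF p, of m] by simp
  then show ?thesis by blast
qed

lemma prime_alg:
  assumes a: "a \<noteq> cl_zero" and b: "b \<noteq> cl_zero"
  shows "\<exists>y. M (M a y) b \<noteq> cl_zero"
proof (rule ccontr)
  assume "\<not> (\<exists>y. M (M a y) b \<noteq> cl_zero)"
  then have z: "M (M a y) b = cl_zero" for y by blast
  obtain c where c: "tau0 (M b c) \<noteq> 0" using tau_nondeg b by blast
  let ?D = "of_nat (card (UNIV :: 'n set set)) :: complex"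
  have "M a (avg (M b c)) = csum (\<lambda>S. M (M (M a (bs S)) b) (M c (bi S))) UNIV"
    unfolding avg_def by (simp add: mult_csum_right assoc)
  also have "\<dots> = cl_zero" unfolding z mult_zero_left by (simp add: fun_eq_iff pw)
  finally have "cl_scale (?D * tau0 (M b c)) a = cl_zero"
    by (simp add: avg_eq mult_scale_right)
  then have "a = cl_zero" using c by (simp add: fun_eq_iff pw)
  then show False using a by simp
qed

end



no_notation vec_lambda (binder "\<chi>" 10)

context clfs begin

lemma spin_mem: "M e e = e \<Longrightarrow> \<psi> \<in> spinor_module eps e \<Longrightarrow> M \<psi> e = \<psi>"
  unfolding spinor_module_def by (auto simp: assoc)

lemma M1:
  assumes p: "primitive_idempotent eps e" and ne: "M e (X e) \<noteq> cl_zero"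
    and psi: "\<psi> \<noteq> cl_zero" and pe: "M \<psi> e = \<psi>"
  shows "M \<psi> (X e) \<noteq> cl_zero"
proof
  assume z: "M \<psi> (X e) = cl_zero"
  have ee: "M e e = e" using p by (rule prim_idem)
  have enz: "e \<noteq> cl_zero" using p by (rule prim_nz)
  obtain y where y: "M (M e y) \<psi> \<noteq> cl_zero" using prime_alg[OF enz psi] by blast
  let ?w = "M (M e y) \<psi>"
  have wB: "inB e ?w" unfolding inB_def using ee pe by (simp add: assoc[symmetric]) (simp add: assoc)
  obtain \<mu> where mu: "?w = cl_scale \<mu> e" using scalar_B[OF p wB] by blast
  have "M ?w (X e) = cl_zero" using z by (simp add: assoc)
  then have "cl_scale \<mu> (M e (X e)) = cl_zero" using mu by (simp add: mult_scale_left)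
  moreover have "\<mu> \<noteq> 0" using y mu by auto
  ultimately have "M e (X e) = cl_zero" by (simp add: fun_eq_iff pw)
  then show False using ne by simp
qed

lemma nondeg:
  assumes p: "primitive_idempotent eps e" and ne: "M e (X e) \<noteq> cl_zero"
    and psi: "\<psi> \<in> spinor_module eps e"
    and all0: "\<forall>\<phi>\<in>spinor_module eps e. sp \<psi> \<phi> = 0"
  shows "\<psi> = cl_zero"
proof (rule ccontr)
  assume nz: "\<psi> \<noteq> cl_zero"
  have ee: "M e e = e" using p by (rule prim_idem)
  have "M \<psi> (X e) \<noteq> cl_zero" using M1[OF p ne nz spin_mem[OF ee psi]] .
  then have "X (M \<psi> (X e)) \<noteq> cl_zero" by (simp add: X_eq_zero)
  then have "M e (X \<psi>) \<noteq> cl_zero" by (simp add: X_mult)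
  then obtain b where b: "tau0 (M (M e (X \<psi>)) b) \<noteq> 0" using tau_nondeg by blast
  have "M b e \<in> spinor_module eps e" unfolding spinor_module_def by blast
  then have "sp \<psi> (M b e) = 0" using all0 by blast
  moreover have "sp \<psi> (M b e) = tau0 (M (M e (X \<psi>)) b)"
  proof -
    have "sp \<psi> (M b e) = tau0 (M (M (X \<psi>) b) e)" by (simp add: sp_def assoc)
    also have "\<dots> = tau0 (M e (M (X \<psi>) b))" by (rule tau_comm)
    also have "\<dots> = tau0 (M (M e (X \<psi>)) b)" by (simp add: assoc)
    finally show ?thesis .
  qed
  ultimately show False using b by simp
qed

lemma exists_f:
  assumes p: "primitive_idempotent eps e" and ne: "M e (X e) \<noteq> cl_zero"
  shows "\<exists>f. primitive_idempotent eps f \<and> X f = f \<and> spinor_module eps e = spinor_module eps f"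
proof -
  have ee: "M e e = e" using p by (rule prim_idem)
  have enz: "e \<noteq> cl_zero" using p by (rule prim_nz)
  have Xenz: "X e \<noteq> cl_zero" using enz by (simp add: X_eq_zero)
  obtain y0 where y0: "M (M (X e) y0) e \<noteq> cl_zero" using prime_alg[OF Xenz enz] by blast
  define x0 where "x0 = M (M (X e) y0) e"
  have x0e: "M x0 e = x0" unfolding x0_def using ee by (simp add: assoc)
  have Xx0: "X x0 = M (M (X e) (X y0)) e" unfolding x0_def by (simp add: X_mult assoc)
  have Xx0e: "M (X x0) e = X x0" unfolding Xx0 using ee by (simp add: assoc)
  have Xx0nz: "X x0 \<noteq> cl_zero" using y0 unfolding x0_def by (simp add: X_eq_zero)
  have "M (X x0) (X e) \<noteq> cl_zero" by (rule M1[OF p ne Xx0nz Xx0e])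
  then have "X (M (X x0) (X e)) \<noteq> cl_zero" by (simp add: X_eq_zero)
  then have ex0: "M e x0 \<noteq> cl_zero" by (simp add: X_mult)
  have "inB e (M e x0)" unfolding inB_def using ee x0e by (simp add: assoc[symmetric]) (simp add: assoc)
  then obtain \<mu> where mu: "M e x0 = cl_scale \<mu> e" using scalar_B[OF p] by blast
  have munz: "\<mu> \<noteq> 0" using ex0 mu by auto
  define f where "f = cl_scale (1 / \<mu>) x0"
  have ef: "M e f = e" unfolding f_def using mu munz by (simp add: mult_scale_right)
  have fe: "M f e = f" unfolding f_def using x0e by (simp add: mult_scale_left)
  have zf: "M z f = z" if "M z e = z" for z
  proof -
    have "M z f = M (M z e) f" using that by simp
    also have "\<dots> = M z (M e f)" by (rule assoc)
    also have "\<dots> = z" using that ef by simp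
    finally show ?thesis .
  qed
  have ff: "M f f = f" using zf[OF fe] .
  have fnz: "f \<noteq> cl_zero" using ef enz by auto
  have Xfe: "M (X f) e = X f" unfolding f_def using Xx0e by (simp add: X_scale mult_scale_left)
  have Xff: "M (X f) f = X f" using zf[OF Xfe] .
  have "X (M (X f) f) = M (X f) f" by (simp add: X_mult)
  then have Xf: "X f = f" using Xff by simp
  have sm: "spinor_module eps e = spinor_module eps f"
  proof
    show "spinor_module eps e \<subseteq> spinor_module eps f"
    proof
      fix \<psi> assume "\<psi> \<in> spinor_module eps e"
      then have "M \<psi> e = \<psi>" by (rule spin_mem[OF ee])
      then have "\<psi> = M \<psi> f" using zf by simp
      then show "\<psi> \<in> spinor_module eps f" unfolding spinor_module_def by blast
    qed
    show "spinor_module eps f \<subseteq> spinor_module eps e"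
    proof
      fix \<psi> assume "\<psi> \<in> spinor_module eps f"
      then have "M \<psi> f = \<psi>" by (rule spin_mem[OF ff])
      then have "\<psi> = M \<psi> e" using fe by (metis assoc)
      then show "\<psi> \<in> spinor_module eps e" unfolding spinor_module_def by blast
    qed
  qed
  have fAf: "\<exists>\<nu>. M f (M w f) = cl_scale \<nu> f" for w
  proof -
    let ?t = "M e (M w f)"
    have "inB e ?t" unfolding inB_def using ee fe by (simp add: assoc[symmetric]) (simp add: assoc)
    then obtain \<nu> where nu: "?t = cl_scale \<nu> e" using scalar_B[OF p] by blast
    have "M f (M w f) = M (M f e) (M w f)" using fe by simp
    also have "\<dots> = M f ?t" by (simp add: assoc)
    also have "\<dots> = cl_scale \<nu> f" using nu fe by (simp add: mult_scale_right)
    finally show ?thesis by blast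
  qed
  have primf: "primitive_idempotent eps f"
    unfolding primitive_idempotent_def cl_idempotent_def
  proof (intro conjI ff fnz notI)
    assume "\<exists>g h. M g g = g \<and> M h h = h \<and> g \<noteq> cl_zero \<and> h \<noteq> cl_zero \<and>
             M g h = cl_zero \<and> M h g = cl_zero \<and> f = cl_add g h"
    then obtain g h where g: "M g g = g" and h: "M h h = h" and gnz: "g \<noteq> cl_zero" and hnz: "h \<noteq> cl_zero"
      and gh: "M g h = cl_zero" and hg: "M h g = cl_zero" and fgh: "f = cl_add g h" by blast
    have fg: "M f g = g" unfolding fgh by (simp add: mult_add_left g hg)
    have gf: "M g f = g" unfolding fgh by (simp add: mult_add_right g gh)
    obtain \<nu> where nu: "M f (M g f) = cl_scale \<nu> f" using fAf by blast
    have gnu: "g = cl_scale \<nu> f" using nu gf fg by simp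
    have "cl_scale (\<nu> * \<nu>) f = cl_scale \<nu> f"
      using g ff unfolding gnu by (simp add: mult_scale_left mult_scale_right)
    moreover obtain U where U: "f U \<noteq> 0" using fnz by (auto simp: fun_eq_iff pw)
    ultimately have "\<nu> * \<nu> = \<nu>" by (metis cl_scale_apply mult_cancel_right)
    then have "\<nu> = 0 \<or> \<nu> = 1" by (metis mult_cancel_right1 mult_zero_left)
    then show False
    proof
      assume "\<nu> = 0" then show False using gnu gnz by simp
    next
      assume "\<nu> = 1"
      then have "g = f" using gnu by simp
      then have "h = cl_zero" using fgh by (simp add: fun_eq_iff pw)
      then show False using hnz by simp
    qed
  qed
  show ?thesis using primf Xf sm by blast
qed

lemma unique_f:
  assumes f0: "primitive_idempotent eps f0" "X f0 = f0"
    and f1: "primitive_idempotent eps f1" "X f1 = f1"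
    and s: "spinor_module eps f0 = spinor_module eps f1"
  shows "f0 = f1"
proof -
  have i0: "M f0 f0 = f0" using f0 by (simp add: prim_idem)
  have i1: "M f1 f1 = f1" using f1 by (simp add: prim_idem)
  have "f0 \<in> spinor_module eps f0" unfolding spinor_module_def using i0 by (metis rangeI)
  then have "M f0 f1 = f0" using s spin_mem[OF i1] by simp
  have "f1 \<in> spinor_module eps f1" unfolding spinor_module_def using i1 by (metis rangeI)
  then have a: "M f1 f0 = f1" using s spin_mem[OF i0] by simp
  have "X (M f0 f1) = M f1 f0" using f0 f1 by (simp add: X_mult)
  then show ?thesis using \<open>M f0 f1 = f0\<close> a f0 by simp
qed

lemma main:
  assumes p: "primitive_idempotent eps e"
  shows "(M e (X e) = cl_zero \<longrightarrow>
            (\<forall>\<psi>\<in>spinor_module eps e. \<forall>\<phi>\<in>spinor_module eps e. sp \<psi> \<phi> = 0))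
       \<and> (M e (X e) \<noteq> cl_zero \<longrightarrow>
            (\<exists>!f. primitive_idempotent eps f \<and> X f = f \<and>
                  spinor_module eps e = spinor_module eps f)
          \<and> (\<forall>\<psi>\<in>spinor_module eps e. \<forall>\<phi>\<in>spinor_module eps e.
                sp \<psi> \<phi> = cnj (sp \<phi> \<psi>))
          \<and> (\<forall>\<psi>\<in>spinor_module eps e. \<forall>\<phi>\<in>spinor_module eps e. \<forall>\<chi>\<in>spinor_module eps e.
                sp \<psi> (cl_add \<phi> \<chi>) = sp \<psi> \<phi> + sp \<psi> \<chi>)
          \<and> (\<forall>c. \<forall>\<psi>\<in>spinor_module eps e. \<forall>\<phi>\<in>spinor_module eps e.
                sp \<psi> (cl_scale c \<phi>) = c * sp \<psi> \<phi>)
          \<and> (\<forall>\<psi>\<in>spinor_module eps e.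
                (\<forall>\<phi>\<in>spinor_module eps e. sp \<psi> \<phi> = 0) \<longrightarrow> \<psi> = cl_zero)
          \<and> (\<forall>a. \<forall>\<psi>\<in>spinor_module eps e. \<forall>\<phi>\<in>spinor_module eps e.
                sp (M a \<psi>) \<phi> = sp \<psi> (M (X a) \<phi>)))"
proof (intro conjI impI)
  assume z: "M e (X e) = cl_zero"
  show "\<forall>\<psi>\<in>spinor_module eps e. \<forall>\<phi>\<in>spinor_module eps e. sp \<psi> \<phi> = 0"
    unfolding spinor_module_def using part1[OF z] by blast
next
  assume ne: "M e (X e) \<noteq> cl_zero"
  show "\<exists>!f. primitive_idempotent eps f \<and> X f = f \<and> spinor_module eps e = spinor_module eps f"
  proof -
    obtain f where f: "primitive_idempotent eps f" "X f = f" "spinor_module eps e = spinor_module eps f"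
      using exists_f[OF p ne] by blast
    show ?thesis
    proof (rule ex1I[of _ f])
      show "primitive_idempotent eps f \<and> X f = f \<and> spinor_module eps e = spinor_module eps f" using f by blast
      fix g assume g: "primitive_idempotent eps g \<and> X g = g \<and> spinor_module eps e = spinor_module eps g"
      have g1: "primitive_idempotent eps g" and g2: "X g = g" using g by simp_all
      have sgf: "spinor_module eps g = spinor_module eps f" using g f(3) by simp
      show "g = f" by (rule unique_f[OF g1 g2 f(1) f(2) sgf])
    qed
  qed
  show "\<forall>\<psi>\<in>spinor_module eps e. \<forall>\<phi>\<in>spinor_module eps e. sp \<psi> \<phi> = cnj (sp \<phi> \<psi>)"
    using sp_herm by blast
  show "\<forall>\<psi>\<in>spinor_module eps e. \<forall>\<phi>\<in>spinor_module eps e. \<forall>\<chi>\<in>spinor_module eps e.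
                sp \<psi> (cl_add \<phi> \<chi>) = sp \<psi> \<phi> + sp \<psi> \<chi>"
    using sp_add by blast
  show "\<forall>c. \<forall>\<psi>\<in>spinor_module eps e. \<forall>\<phi>\<in>spinor_module eps e. sp \<psi> (cl_scale c \<phi>) = c * sp \<psi> \<phi>"
    using sp_scale by blast
  show "\<forall>\<psi>\<in>spinor_module eps e. (\<forall>\<phi>\<in>spinor_module eps e. sp \<psi> \<phi> = 0) \<longrightarrow> \<psi> = cl_zero"
    using nondeg[OF p ne] by blast
  show "\<forall>a. \<forall>\<psi>\<in>spinor_module eps e. \<forall>\<phi>\<in>spinor_module eps e. sp (M a \<psi>) \<phi> = sp \<psi> (M (X a) \<phi>)"
    using sp_compat by blast
qed

end

theorem proposition11:
  fixes eps :: "'n::{finite,linorder} \<Rightarrow> real"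
    and \<sigma> :: "'n clf \<Rightarrow> 'n clf"
    and e :: "'n clf"
  assumes even_dim: "even (card (UNIV :: 'n set))"
    and nondeg: "\<forall>i. eps i = 1 \<or> eps i = -1"
    and rs: "real_structure eps \<sigma>"
    and prim: "primitive_idempotent eps e"
  shows "(cl_mult eps e (cl_adj eps \<sigma> e) = cl_zero \<longrightarrow>
            (\<forall>\<psi>\<in>spinor_module eps e. \<forall>\<phi>\<in>spinor_module eps e. sigma_prod eps \<sigma> \<psi> \<phi> = 0))
       \<and> (cl_mult eps e (cl_adj eps \<sigma> e) \<noteq> cl_zero \<longrightarrow>
            (\<exists>!f. primitive_idempotent eps f \<and> cl_adj eps \<sigma> f = f \<and>
                  spinor_module eps e = spinor_module eps f)
          \<and> (\<forall>\<psi>\<in>spinor_module eps e. \<forall>\<phi>\<in>spinor_module eps e.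
                sigma_prod eps \<sigma> \<psi> \<phi> = cnj (sigma_prod eps \<sigma> \<phi> \<psi>))
          \<and> (\<forall>\<psi>\<in>spinor_module eps e. \<forall>\<phi>\<in>spinor_module eps e. \<forall>\<chi>\<in>spinor_module eps e.
                sigma_prod eps \<sigma> \<psi> (cl_add \<phi> \<chi>) = sigma_prod eps \<sigma> \<psi> \<phi> + sigma_prod eps \<sigma> \<psi> \<chi>)
          \<and> (\<forall>c. \<forall>\<psi>\<in>spinor_module eps e. \<forall>\<phi>\<in>spinor_module eps e.
                sigma_prod eps \<sigma> \<psi> (cl_scale c \<phi>) = c * sigma_prod eps \<sigma> \<psi> \<phi>)
          \<and> (\<forall>\<psi>\<in>spinor_module eps e.
                (\<forall>\<phi>\<in>spinor_module eps e. sigma_prod eps \<sigma> \<psi> \<phi> = 0) \<longrightarrow> \<psi> = cl_zero)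
          \<and> (\<forall>a. \<forall>\<psi>\<in>spinor_module eps e. \<forall>\<phi>\<in>spinor_module eps e.
                sigma_prod eps \<sigma> (cl_mult eps a \<psi>) \<phi> = sigma_prod eps \<sigma> \<psi> (cl_mult eps (cl_adj eps \<sigma> a) \<phi>)))"
proof -
  interpret clfs eps \<sigma>
    by (unfold_locales) (use nondeg even_dim rs in auto)
  show ?thesis unfolding sp_eq adj_eq by (rule main[OF prim])
qed


end
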